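(* Let $m\ge1$ and $\mathfrak{g}_m=\mathfrak{sl}(2)\ltimes V(m)$ with $\mathfrak{r}=V(m)$. Let $V=V(a_0)\oplus\cdots\oplus V(a_\ell)$ and $W=V(b_0)\oplus\cdots\oplus V(b_{\ell'})$, with $\ell,\ell'\ge1$, be the socle decompositions of two uniserial $\mathfrak{g}_m$-modules, and for $t\ge0$ set $S_t=\big(\bigoplus_{i+j=t}V(a_i)\otimes V(b_j)\big)^{\mathfrak{r}}$ (the vectors annihilated by $\mathfrak{r}$). If $t>\min\{\ell,\ell'\}$ then $S_t=0$. If $0<t\le\min\{\ell,\ell'\}$ and $\mu$ is a highest weight occurring in $S_t$ (i.e. $S_t$ contains a highest weight vector of weight $\mu$), then $\mu$ is a highest weight of an irreducible $\mathfrak{sl}(2)$-summand of each $V(a_i)\otimes V(b_{t-i})$, $i=0,\dots,t$; moreover the space of vectors of $S_t$ of weight $\mu$ annihilated by $e$ is one-dimensional and is spanned by a linear combination $\sum_{i=0}^t q_i\,v_0^{a_i,b_{t-i},\mu}$ with $q_i\ne0$ for all $i=0,\dots,t$, where $v_0^{a,b,\mu}$ denotes a (fixed) highest weight vector of weight $\mu$ in $V(a)\otimes V(b)$.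
   Context: $\mathbb{F}$ is a field of characteristic zero; all modules are finite dimensional. $V(a)$ is the irreducible $\mathfrak{sl}(2)$-module of highest weight $a$; $\mathfrak{g}_m=\mathfrak{sl}(2)\ltimes V(m)$ with $\mathfrak{r}=V(m)$ an abelian ideal. A uniserial module is one with a unique composition series. A socle decomposition of a uniserial $\mathfrak{g}_m$-module $V$ of length $\ell+1$ is a decomposition $V=V(a_0)\oplus\cdots\oplus V(a_\ell)$ into irreducible $\mathfrak{sl}(2)$-submodules with $\mathrm{soc}^{k}(V)=V(a_0)\oplus\cdots\oplus V(a_{k-1})$ for all $k$. Since $V(a)\otimes V(b)\cong\bigoplus_{k=0}^{\min(a,b)}V(a+b-2k)$ is multiplicity free, a highest weight vector of weight $\mu$ in $V(a)\otimes V(b)$ is unique up to scalar when it exists. *)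

theory Defs
  imports "HOL-Analysis.Analysis"
begin

text \<open>Finite-dimensional modules are modelled concretely: an F-vector space of
dimension CARD('n) is the coordinate space 'a^'n, and linear operators are
square matrices acting by the matrix-vector product. The tensor product of
'a^'i and 'a^'j is 'a^('i \<times> 'j).\<close>

definition hw_vec :: "'a::field^'n^'n \<Rightarrow> 'a^'n^'n \<Rightarrow> nat \<Rightarrow> 'a^'n \<Rightarrow> bool" where
  "hw_vec E H \<mu> v \<longleftrightarrow> v \<noteq> 0 \<and> E *v v = 0 \<and> H *v v = of_nat \<mu> *s v"

definition inv_sub :: "('a::field^'n^'n) set \<Rightarrow> ('a^'n) set \<Rightarrow> bool" where
  "inv_sub Ops U \<longleftrightarrow> vec.subspace U \<and> (\<forall>A\<in>Ops. \<forall>v\<in>U. A *v v \<in> U)"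

definition irred_sl2 :: "'a::field^'n^'n \<Rightarrow> 'a^'n^'n \<Rightarrow> 'a^'n^'n \<Rightarrow> ('a^'n) set \<Rightarrow> bool" where
  "irred_sl2 E H F U \<longleftrightarrow> inv_sub {E, H, F} U \<and> U \<noteq> {0} \<and>
     (\<forall>U'. inv_sub {E, H, F} U' \<and> U' \<subseteq> U \<longrightarrow> U' = {0} \<or> U' = U)"

text \<open>Irreducible sl(2)-submodule isomorphic to V(a), i.e. of highest weight a.\<close>
definition irred_hw :: "'a::field^'n^'n \<Rightarrow> 'a^'n^'n \<Rightarrow> 'a^'n^'n \<Rightarrow> nat \<Rightarrow> ('a^'n) set \<Rightarrow> bool" where
  "irred_hw E H F a U \<longleftrightarrow> irred_sl2 E H F U \<and> (\<exists>v\<in>U. hw_vec E H a v)"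

text \<open>A representation of g_m = sl(2) \<ltimes> V(m) on 'a^'n: matrices for e, h, f and
for the basis x_0, ..., x_m of V(m), where (in g_m) [h,x_k] = (m-2k) x_k,
[f,x_k] = x_{k+1} (x_{m+1} = 0), [e,x_k] = k(m-k+1) x_{k-1}, [x_j,x_k] = 0.\<close>
record ('a, 'n) gmod =
  gE :: "'a^'n^'n"
  gH :: "'a^'n^'n"
  gF :: "'a^'n^'n"
  gX :: "nat \<Rightarrow> 'a^'n^'n"

definition br :: "'a::comm_ring_1^'n^'n \<Rightarrow> 'a^'n^'n \<Rightarrow> 'a^'n^'n" where
  "br A B = A ** B - B ** A"

definition msc :: "'a::times \<Rightarrow> 'a^'n^'n \<Rightarrow> 'a^'n^'n" where
  "msc c A = (\<chi> i j. c * A $ i $ j)"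

definition is_gm_module :: "nat \<Rightarrow> ('a::field, 'n::finite) gmod \<Rightarrow> bool" where
  "is_gm_module m M \<longleftrightarrow>
     br (gH M) (gE M) = msc 2 (gE M) \<and>
     br (gH M) (gF M) = msc (-2) (gF M) \<and>
     br (gE M) (gF M) = gH M \<and>
     (\<forall>k\<le>m. br (gH M) (gX M k) = msc (of_int (int m - 2 * int k)) (gX M k)) \<and>
     (\<forall>k\<le>m. br (gF M) (gX M k) = (if k = m then 0 else gX M (Suc k))) \<and>
     (\<forall>k\<le>m. br (gE M) (gX M k) =
        (if k = 0 then 0 else msc (of_nat (k * (m - k + 1))) (gX M (k - 1)))) \<and>
     (\<forall>j\<le>m. \<forall>k\<le>m. br (gX M j) (gX M k) = 0)"

definition gm_ops :: "nat \<Rightarrow> ('a, 'n::finite) gmod \<Rightarrow> ('a^'n^'n) set" where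
  "gm_ops m M = {gE M, gH M, gF M} \<union> gX M ` {..m}"

definition gsub :: "nat \<Rightarrow> ('a::field, 'n::finite) gmod \<Rightarrow> ('a^'n) set \<Rightarrow> bool" where
  "gsub m M U \<longleftrightarrow> inv_sub (gm_ops m M) U"

definition comp_series :: "nat \<Rightarrow> ('a::field, 'n::finite) gmod \<Rightarrow> ('a^'n) set list \<Rightarrow> bool" where
  "comp_series m M Us \<longleftrightarrow> Us \<noteq> [] \<and> hd Us = {0} \<and> last Us = UNIV \<and>
     (\<forall>U\<in>set Us. gsub m M U) \<and>
     (\<forall>k < length Us - 1. Us ! k \<subset> Us ! Suc k \<and>
        (\<forall>U. gsub m M U \<and> Us ! k \<subseteq> U \<and> U \<subseteq> Us ! Suc k \<longrightarrow> U = Us ! k \<or> U = Us ! Suc k))"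

definition uniserial :: "nat \<Rightarrow> ('a::field, 'n::finite) gmod \<Rightarrow> bool" where
  "uniserial m M \<longleftrightarrow> (\<exists>!Us. comp_series m M Us)"

text \<open>Socle series: soc^0 = 0 and soc^{k+1} is the preimage of soc(V/soc^k), i.e.
soc^k plus all submodules U \<supseteq> soc^k with U/soc^k irreducible.\<close>
definition socle_step :: "nat \<Rightarrow> ('a::field, 'n::finite) gmod \<Rightarrow> ('a^'n) set \<Rightarrow> ('a^'n) set" where
  "socle_step m M N = vec.span (N \<union> \<Union>{U. gsub m M U \<and> N \<subset> U \<and>
       (\<forall>U'. gsub m M U' \<and> N \<subseteq> U' \<and> U' \<subseteq> U \<longrightarrow> U' = N \<or> U' = U)})"

definition soc :: "nat \<Rightarrow> ('a::field, 'n::finite) gmod \<Rightarrow> nat \<Rightarrow> ('a^'n) set" where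
  "soc m M k = (socle_step m M ^^ k) {0}"

definition is_dsum :: "(nat \<Rightarrow> ('a::field^'n) set) \<Rightarrow> nat \<Rightarrow> ('a^'n) set \<Rightarrow> bool" where
  "is_dsum A l S \<longleftrightarrow> (\<forall>i\<le>l. A i \<subseteq> S) \<and>
     (\<forall>v\<in>S. \<exists>!u. (\<forall>i\<le>l. u i \<in> A i) \<and> (\<forall>i>l. u i = 0) \<and> v = (\<Sum>i\<le>l. u i))"

text \<open>Socle decomposition V = V(a_0) \<oplus> ... \<oplus> V(a_l) into irreducible sl(2)-submodules
A i of highest weight a i, with soc^k = A 0 \<oplus> ... \<oplus> A (k-1).\<close>
definition socle_decomp :: "nat \<Rightarrow> ('a::field, 'n::finite) gmod \<Rightarrow> nat \<Rightarrow> (nat \<Rightarrow> nat)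
    \<Rightarrow> (nat \<Rightarrow> ('a^'n) set) \<Rightarrow> bool" where
  "socle_decomp m M l a A \<longleftrightarrow> is_dsum A l UNIV \<and>
     (\<forall>i\<le>l. irred_hw (gE M) (gH M) (gF M) (a i) (A i)) \<and>
     (\<forall>k\<le>Suc l. soc m M k = vec.span (\<Union>i<k. A i))"

definition tvec :: "'a::times^'i \<Rightarrow> 'a^'j \<Rightarrow> 'a^('i \<times> 'j)" where
  "tvec u w = (\<chi> p. u $ fst p * w $ snd p)"

text \<open>The operator A \<otimes> 1 + 1 \<otimes> B on V \<otimes> W.\<close>
definition tmat :: "'a::monoid_add^'i^'i \<Rightarrow> 'a^'j^'j \<Rightarrow> 'a^('i \<times> 'j)^('i \<times> 'j)" where
  "tmat A B = (\<chi> p q. (if snd p = snd q then A $ fst p $ fst q else 0) +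
                      (if fst p = fst q then B $ snd p $ snd q else 0))"

definition tsub :: "('a::field^'i) set \<Rightarrow> ('a^'j) set \<Rightarrow> ('a^('i \<times> 'j)) set" where
  "tsub U U' = vec.span {tvec u w | u w. u \<in> U \<and> w \<in> U'}"

text \<open>S_t = (\<oplus>_{i+j=t} V(a_i) \<otimes> V(b_j))^r.\<close>
definition S_space :: "nat \<Rightarrow> ('a::field, 'i::finite) gmod \<Rightarrow> ('a, 'j::finite) gmod
    \<Rightarrow> (nat \<Rightarrow> ('a^'i) set) \<Rightarrow> (nat \<Rightarrow> ('a^'j) set) \<Rightarrow> nat \<Rightarrow> nat \<Rightarrow> nat \<Rightarrow> ('a^('i \<times> 'j)) set" where
  "S_space m M N A B l l' t =
     {T \<in> vec.span (\<Union>{tsub (A i) (B j) | i j. i \<le> l \<and> j \<le> l' \<and> i + j = t}).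
        \<forall>k\<le>m. tmat (gX M k) (gX N k) *v T = 0}"

end

theory Submission
  imports Defs
begin

lemma msc_mv: "msc c A *v v = c *s (A *v (v::'a::field^'n))"
  by (simp add: vec_eq_iff matrix_vector_mult_def msc_def sum_distrib_left mult.assoc)

lemma br_mv: "br A B *v v = A *v (B *v v) - B *v (A *v (v::'a::field^'n))"
  by (simp add: br_def matrix_vector_mult_diff_rdistrib matrix_vector_mul_assoc)

lemma mv_scale: "A *v (c *s v) = c *s (A *v (v::'a::field^'n))"
  by (simp add: vec_eq_iff matrix_vector_mult_def sum_distrib_left mult.left_commute)

lemma mv_sum: "A *v (\<Sum>i\<in>S. f i) = (\<Sum>i\<in>S. A *v (f i::'a::field^'n))"
  by (induction S rule: infinite_finite_induct) (auto simp: matrix_vector_right_distrib)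

lemma eig_sum:
  fixes H :: "'a::field^'n^'n"
  assumes "finite S" "\<And>j. j\<in>S \<Longrightarrow> H *v w j = c j *s w j" "inj_on c S" "sum w S = 0"
  shows "\<forall>j\<in>S. w j = 0"
  using assms
proof (induction S arbitrary: w rule: finite_induct)
  case empty then show ?case by simp
next
  case (insert x S)
  have s: "w x + sum w S = 0" using insert by simp
  have "H *v (w x + sum w S) - c x *s (w x + sum w S) = 0" using s by simp
  hence "(\<Sum>j\<in>S. (c j - c x) *s w j) = 0"
    using insert.prems(1)
    by (simp add: matrix_vector_right_distrib mv_sum vector_ssub_ldistrib scaleR_right_diff_distrib
        vec.scale_sum_right sum_subtractf vec.scale_left_diff_distrib)
  moreover have "\<And>j. j\<in>S \<Longrightarrow> H *v ((c j - c x) *s w j) = c j *s ((c j - c x) *s w j)"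
  proof -
    fix j assume "j \<in> S"
    hence "H *v w j = c j *s w j" using insert.prems(1) by simp
    thus "H *v ((c j - c x) *s w j) = c j *s ((c j - c x) *s w j)"
      by (simp only: mv_scale vector_smult_assoc mult.commute)
  qed
  moreover have "inj_on c S" using insert.prems(2) by (auto simp: inj_on_def)
  ultimately have z: "\<forall>j\<in>S. (c j - c x) *s w j = 0"
    using insert.IH[of "\<lambda>j. (c j - c x) *s w j"] by blast
  have "\<forall>j\<in>S. w j = 0"
  proof
    fix j assume j: "j \<in> S"
    have "c j \<noteq> c x" using insert.prems(2) insert.hyps(2) j by (auto simp: inj_on_def)
    thus "w j = 0" using z j by auto
  qed
  moreover hence "w x = 0" using s by simp
  ultimately show ?case by auto
qed

definition fp :: "'a::semiring_1^'n^'n \<Rightarrow> nat \<Rightarrow> 'a^'n \<Rightarrow> 'a^'n" where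
  "fp F j v = ((\<lambda>x. F *v x) ^^ j) v"

lemma fp_0[simp]: "fp F 0 v = v" by (simp add: fp_def)
lemma fp_Suc[simp]: "fp F (Suc j) v = F *v fp F j v" by (simp add: fp_def)

lemma scale_cancel: "a *s x = b *s x \<Longrightarrow> x \<noteq> 0 \<Longrightarrow> a = (b::'a::field)"
proof -
  assume "a *s x = b *s x" "x \<noteq> 0"
  hence "(a - b) *s x = 0" by (simp add: vec.scale_left_diff_distrib)
  thus ?thesis using \<open>x \<noteq> 0\<close> by simp
qed

locale sl2 =
  fixes E H F :: "'a::field_char_0^'n::finite^'n"
  assumes HE: "\<And>v. H *v (E *v v) = E *v (H *v v) + 2 *s (E *v v)"
    and HF: "\<And>v. H *v (F *v v) = F *v (H *v v) - 2 *s (F *v v)"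
    and EF: "\<And>v. E *v (F *v v) = F *v (E *v v) + H *v v"
begin

context
  fixes v :: "'a^'n" and lam :: nat
  assumes Ev: "E *v v = 0" and Hv: "H *v v = of_nat lam *s v"
begin

lemma H_fp: "H *v fp F j v = (of_nat lam - 2 * of_nat j) *s fp F j v"
proof (induction j)
  case 0 then show ?case using Hv by simp
next
  case (Suc j)
  have "H *v fp F (Suc j) v = F *v (H *v fp F j v) - 2 *s (F *v fp F j v)"
    by (simp add: HF)
  also have "\<dots> = (of_nat lam - 2 * of_nat j) *s (F *v fp F j v) - 2 *s (F *v fp F j v)"
    by (simp only: Suc mv_scale)
  also have "\<dots> = ((of_nat lam - 2 * of_nat j) - 2) *s (F *v fp F j v)"
    by (simp only: vec.scale_left_diff_distrib)
  also have "(of_nat lam - 2 * of_nat j) - 2 = (of_nat lam - 2 * of_nat (Suc j) :: 'a)"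
    by simp
  finally show ?case by simp
qed

lemma E_fp: "E *v fp F (Suc j) v = (of_nat (Suc j) * (of_nat lam - of_nat j)) *s fp F j v"
proof (induction j)
  case 0 then show ?case using Ev Hv by (simp add: EF)
next
  case (Suc j)
  have "E *v fp F (Suc (Suc j)) v = F *v (E *v fp F (Suc j) v) + H *v fp F (Suc j) v"
    by (simp add: EF)
  also have "\<dots> = (of_nat (Suc j) * (of_nat lam - of_nat j)) *s fp F (Suc j) v + (of_nat lam - 2 * of_nat (Suc j)) *s fp F (Suc j) v"
    by (simp only: Suc.IH H_fp mv_scale, simp only: fp_Suc)
  also have "\<dots> = ((of_nat (Suc j) * (of_nat lam - of_nat j)) + (of_nat lam - 2 * of_nat (Suc j))) *s fp F (Suc j) v"
    by (simp only: vec.scale_left_distrib)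
  also have "(of_nat (Suc j) * (of_nat lam - of_nat j)) + (of_nat lam - 2 * of_nat (Suc j))
      = (of_nat (Suc (Suc j)) * (of_nat lam - of_nat (Suc j)) :: 'a)"
    by (simp add: algebra_simps)
  finally show ?case .
qed

lemma E_fp0: "E *v fp F 0 v = 0" using Ev by simp

lemma fp_inj_eig: "inj (\<lambda>j. (of_nat lam - 2 * of_nat j :: 'a))"
  by (auto simp: inj_on_def)

lemma fin_bound:
  assumes nz: "\<forall>j\<le>N. fp F j v \<noteq> 0"
  shows "Suc N \<le> CARD('n)"
proof -
  let ?S = "(\<lambda>j. fp F j v) ` {..N}"
  have inj: "inj_on (\<lambda>j. fp F j v) {..N}"
  proof (rule inj_onI)
    fix i j assume i: "i \<in> {..N}" and j: "j \<in> {..N}" and eq: "fp F i v = fp F j v"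
    have "(of_nat lam - 2 * of_nat i) *s fp F i v = H *v fp F i v" by (rule H_fp[symmetric])
    also have "\<dots> = H *v fp F j v" using eq by simp
    also have "\<dots> = (of_nat lam - 2 * of_nat j) *s fp F j v" by (rule H_fp)
    also have "\<dots> = (of_nat lam - 2 * of_nat j) *s fp F i v" using eq by simp
    finally have "(of_nat lam - 2 * of_nat i) *s fp F i v = (of_nat lam - 2 * of_nat j) *s fp F i v" .
    hence "(of_nat lam - 2 * of_nat i :: 'a) = (of_nat lam - 2 * of_nat j)"
      using nz i scale_cancel by blast
    thus "i = j" by simp
  qed
  have ind: "vec.independent ?S"
    unfolding vec.independent_explicit
  proof (intro conjI allI impI ballI)
    show "finite ?S" by simp
    fix c y assume s: "(\<Sum>x\<in>?S. c x *s x) = 0" and y: "y \<in> ?S"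
    then obtain x where x: "x \<in> {..N}" and yx: "y = fp F x v" by blast
    have "(\<Sum>j\<in>{..N}. c (fp F j v) *s fp F j v) = 0"
      using s by (simp add: sum.reindex[OF inj])
    moreover have "\<And>j. j \<in> {..N} \<Longrightarrow> H *v (c (fp F j v) *s fp F j v)
        = (of_nat lam - 2 * of_nat j) *s (c (fp F j v) *s fp F j v)"
      by (simp only: mv_scale H_fp vector_smult_assoc mult.commute)
    moreover have "inj_on (\<lambda>j. of_nat lam - 2 * of_nat j :: 'a) {..N}"
      by (auto simp: inj_on_def)
    ultimately have "\<forall>j\<in>{..N}. c (fp F j v) *s fp F j v = 0"
      using eig_sum[of "{..N}" H "\<lambda>j. c (fp F j v) *s fp F j v" "\<lambda>j. of_nat lam - 2 * of_nat j"]
      by blast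
    thus "c y = 0" using x nz yx by auto
  qed
  have "card ?S \<le> vec.dim ?S" using vec.independent_bound_general[OF ind] by simp
  also have "\<dots> \<le> CARD('n)" by (rule dim_subset_UNIV_cart_gen)
  finally show ?thesis using card_image[OF inj] by simp
qed

lemma fp_top:
  assumes "v \<noteq> 0"
  shows "fp F (Suc lam) v = 0" "\<And>j. j \<le> lam \<Longrightarrow> fp F j v \<noteq> 0"
proof -
  have ex: "\<exists>p. fp F p v = 0"
  proof (rule ccontr)
    assume "\<not> ?thesis"
    hence "Suc CARD('n) \<le> CARD('n)" using fin_bound[of "CARD('n)"] by auto
    thus False by simp
  qed
  obtain p where p: "fp F p v = 0" and pmin: "\<And>q. q < p \<Longrightarrow> fp F q v \<noteq> 0"
    using ex exists_least_iff[of "\<lambda>p. fp F p v = 0"] by blast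
  have "p \<noteq> 0" using p assms by (cases p) auto
  then obtain q where q: "p = Suc q" by (cases p) auto
  have "(of_nat (Suc q) * (of_nat lam - of_nat q) :: 'a) *s fp F q v = 0"
    using E_fp[of q] p q by simp
  moreover have "fp F q v \<noteq> 0" using pmin q by simp
  ultimately have "(of_nat (Suc q) * (of_nat lam - of_nat q) :: 'a) = 0" by simp
  hence "(of_nat lam :: 'a) = of_nat q" by (simp del: of_nat_Suc)
  hence lq: "lam = q" by simp
  show "fp F (Suc lam) v = 0" using p q lq by simp
  show "\<And>j. j \<le> lam \<Longrightarrow> fp F j v \<noteq> 0" using pmin q lq by simp
qed

end
end

lemma span_image_rep:
  assumes "x \<in> vec.span (g ` S)" "finite S"
  shows "\<exists>\<alpha>. x = (\<Sum>j\<in>S. \<alpha> j *s g j)"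
  using assms(1)
proof (induction rule: vec.span_induct_alt)
  case base
  show ?case by (rule exI[of _ "\<lambda>_. 0"]) simp
next
  case (step c x y)
  then obtain \<alpha> where a: "y = (\<Sum>j\<in>S. \<alpha> j *s g j)" by blast
  from step obtain j0 where j0: "j0 \<in> S" "x = g j0" by blast
  have "c *s x + y = (\<Sum>j\<in>S. (if j = j0 then c else 0) *s g j) + (\<Sum>j\<in>S. \<alpha> j *s g j)"
  proof -
    have "(\<Sum>j\<in>S. (if j = j0 then c else 0) *s g j) = (\<Sum>j\<in>S. if j = j0 then c *s g j else 0)"
      by (rule sum.cong) auto
    also have "\<dots> = c *s g j0" using j0 assms(2) by (simp add: sum.delta')
    finally show ?thesis using j0 a by simp
  qed
  also have "\<dots> = (\<Sum>j\<in>S. ((if j = j0 then c else 0) + \<alpha> j) *s g j)"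
    by (simp add: sum.distrib[symmetric] vec.scale_left_distrib)
  finally show ?case by (rule exI[where x="\<lambda>j. (if j = j0 then c else 0) + \<alpha> j"])
qed

lemma span_inv:
  assumes "\<And>g. g \<in> G \<Longrightarrow> A *v g \<in> vec.span G'" "x \<in> vec.span G"
  shows "A *v x \<in> vec.span G'"
  using assms(2)
proof (induction rule: vec.span_induct_alt)
  case base then show ?case by (simp add: vec.span_zero)
next
  case (step c x y)
  then show ?case using assms(1)
    by (simp add: matrix_vector_right_distrib mv_scale vec.span_add vec.span_scale)
qed

lemma inv_sub_fp:
  assumes "inv_sub Ops U" "A \<in> Ops" "x \<in> U"
  shows "fp A n x \<in> U"
  using assms by (induction n) (auto simp: inv_sub_def)

lemma fp_Suc': "fp A (Suc n) x = fp A n (A *v x)"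
  by (simp add: fp_def funpow_Suc_right del: funpow.simps)

lemma sum_single:
  assumes "finite S" "k \<in> S" "\<And>j. j \<in> S \<Longrightarrow> j \<noteq> k \<Longrightarrow> f j = 0"
  shows "sum f S = f k"
proof -
  have "sum f S = f k + sum f (S - {k})" using assms by (simp add: sum.remove)
  also have "sum f (S - {k}) = 0" using assms by (intro sum.neutral) auto
  finally show ?thesis by simp
qed

lemma scal_lemma: "\<alpha> *s (c *s f) - \<nu> *s (\<alpha> *s f) = (c - \<nu>) *s (\<alpha> *s (f::'a::field^'n))"
  by (simp add: vec_eq_iff algebra_simps)

definition Sp :: "'a::field^'n^'n \<Rightarrow> 'a^'n \<Rightarrow> nat \<Rightarrow> ('a^'n) set" where
  "Sp F v lam = vec.span ((\<lambda>j. fp F j v) ` {..lam})"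

context sl2
begin

context
  fixes v :: "'a^'n" and lam :: nat
  assumes Ev: "E *v v = 0" and Hv: "H *v v = of_nat lam *s v" and nz: "v \<noteq> 0"
begin

lemma Sp_rep: "x \<in> Sp F v lam \<Longrightarrow> \<exists>\<alpha>. x = (\<Sum>j\<le>lam. \<alpha> j *s fp F j v)"
  unfolding Sp_def by (rule span_image_rep) auto

lemma fp_in_Sp: "j \<le> lam \<Longrightarrow> fp F j v \<in> Sp F v lam"
  unfolding Sp_def by (rule vec.span_base) auto

lemma v_in_Sp: "v \<in> Sp F v lam" using fp_in_Sp[of 0] by simp

lemma E_fp_nz: "1 \<le> j \<Longrightarrow> j \<le> lam \<Longrightarrow> E *v fp F j v \<noteq> 0"
proof -
  assume j: "1 \<le> j" "j \<le> lam"
  then obtain i where i: "j = Suc i" by (cases j) auto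
  have n1: "(of_nat (Suc i) :: 'a) \<noteq> 0" by (simp only: of_nat_eq_0_iff)
  have n2: "(of_nat lam - of_nat i :: 'a) \<noteq> 0" using j i by simp
  have "(of_nat (Suc i) * (of_nat lam - of_nat i) :: 'a) \<noteq> 0" using n1 n2 by (simp only: mult_eq_0_iff) simp
  moreover have "fp F i v \<noteq> 0" using fp_top(2)[OF Ev Hv nz, of i] j i by simp
  ultimately show ?thesis using E_fp[OF Ev Hv, of i] i by simp
qed

lemma Sp_inv: "inv_sub {E, H, F} (Sp F v lam)"
  unfolding inv_sub_def
proof (intro conjI ballI)
  show "vec.subspace (Sp F v lam)" unfolding Sp_def by simp
  fix A x assume A: "A \<in> {E, H, F}" and x: "x \<in> Sp F v lam"
  have gen: "A *v fp F j v \<in> Sp F v lam" if j: "j \<le> lam" for j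
  proof -
    consider "A = E" | "A = H" | "A = F" using A by blast
    then show ?thesis
    proof cases
      case 1
      show ?thesis
      proof (cases j)
        case 0 then show ?thesis using 1 Ev by (simp add: Sp_def vec.span_zero)
      next
        case (Suc i)
        then show ?thesis using 1 E_fp[OF Ev Hv, of i] fp_in_Sp[of i] j
          by (simp add: Sp_def vec.span_scale del: fp_Suc)
      qed
    next
      case 2 then show ?thesis using H_fp[OF Ev Hv, of j] fp_in_Sp[OF j]
        by (metis vec.span_scale Sp_def)
    next
      case 3
      show ?thesis
      proof (cases "j = lam")
        case True then show ?thesis using 3 fp_top(1)[OF Ev Hv nz]
          by (simp add: Sp_def vec.span_zero)
      next
        case False
        then show ?thesis using 3 fp_in_Sp[of "Suc j"] j by simp
      qed
    qed
  qed
  show "A *v x \<in> Sp F v lam"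
    unfolding Sp_def
  proof (rule span_inv[OF _ x[unfolded Sp_def]])
    fix g assume "g \<in> (\<lambda>j. fp F j v) ` {..lam}"
    then obtain j where j: "j \<le> lam" "g = fp F j v" by auto
    show "A *v g \<in> vec.span ((\<lambda>j. fp F j v) ` {..lam})" using gen[OF j(1)] j(2) unfolding Sp_def by simp
  qed
qed

lemma Sp_Ekill:
  assumes x: "x \<in> Sp F v lam" and Ex: "E *v x = 0"
  shows "\<exists>c. x = c *s v"
proof -
  obtain \<alpha> where a: "x = (\<Sum>j\<le>lam. \<alpha> j *s fp F j v)" using Sp_rep[OF x] by blast
  have "E *v x = (\<Sum>j\<le>lam. \<alpha> j *s (E *v fp F j v))"
    unfolding a by (simp only: mv_sum mv_scale)
  hence "(\<Sum>j\<le>lam. \<alpha> j *s (E *v fp F j v)) = 0" using Ex by simp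
  moreover have "\<And>j. j \<in> {..lam} \<Longrightarrow> H *v (\<alpha> j *s (E *v fp F j v))
      = (of_nat lam - 2 * of_nat j + 2) *s (\<alpha> j *s (E *v fp F j v))"
  proof -
    fix j
    have "H *v (E *v fp F j v) = E *v (H *v fp F j v) + 2 *s (E *v fp F j v)" by (rule HE)
    also have "\<dots> = (of_nat lam - 2 * of_nat j) *s (E *v fp F j v) + 2 *s (E *v fp F j v)"
      by (simp only: H_fp[OF Ev Hv] mv_scale)
    also have "\<dots> = (of_nat lam - 2 * of_nat j + 2) *s (E *v fp F j v)"
      by (simp only: vec.scale_left_distrib)
    finally show "H *v (\<alpha> j *s (E *v fp F j v))
      = (of_nat lam - 2 * of_nat j + 2) *s (\<alpha> j *s (E *v fp F j v))"
      by (simp only: mv_scale vector_smult_assoc mult.commute)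
  qed
  moreover have "inj_on (\<lambda>j. of_nat lam - 2 * of_nat j + 2 :: 'a) {..lam}"
    by (auto simp: inj_on_def)
  ultimately have z: "\<forall>j\<in>{..lam}. \<alpha> j *s (E *v fp F j v) = 0"
    using eig_sum[of "{..lam}" H "\<lambda>j. \<alpha> j *s (E *v fp F j v)" "\<lambda>j. of_nat lam - 2 * of_nat j + 2"] by blast
  have "x = \<alpha> 0 *s fp F 0 v"
    unfolding a
  proof (rule sum_single[where k=0])
    fix j assume j: "j \<in> {..lam}" "j \<noteq> 0"
    hence "E *v fp F j v \<noteq> 0" using E_fp_nz[of j] by simp
    moreover have "\<alpha> j *s (E *v fp F j v) = 0" using z j(1) by blast
    ultimately have "\<alpha> j = 0" by simp
    thus "\<alpha> j *s fp F j v = 0" by simp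
  qed simp_all
  thus ?thesis by auto
qed

lemma Sp_E_nil: "x \<in> vec.span ((\<lambda>j. fp F j v) ` {..<k}) \<Longrightarrow> fp E k x = 0"
proof (induction k arbitrary: x)
  case 0 then show ?case by simp
next
  case (Suc k)
  have "E *v x \<in> vec.span ((\<lambda>j. fp F j v) ` {..<k})"
  proof (rule span_inv[OF _ Suc.prems])
    fix g assume "g \<in> (\<lambda>j. fp F j v) ` {..<Suc k}"
    then obtain j where j: "j < Suc k" "g = fp F j v" by blast
    show "E *v g \<in> vec.span ((\<lambda>j. fp F j v) ` {..<k})"
    proof (cases j)
      case 0 then show ?thesis using j Ev by (simp add: vec.span_zero)
    next
      case (Suc i)
      then show ?thesis using j E_fp[OF Ev Hv, of i]
        by (simp del: fp_Suc) (intro vec.span_scale vec.span_base, auto)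
    qed
  qed
  then show ?case using Suc.IH by (simp only: fp_Suc')
qed

lemma Sp_irred: "irred_hw E H F lam (Sp F v lam)"
  unfolding irred_hw_def irred_sl2_def
proof (intro conjI)
  show "inv_sub {E, H, F} (Sp F v lam)" by (rule Sp_inv)
  show "Sp F v lam \<noteq> {0}" using v_in_Sp nz by auto
  show "\<exists>w\<in>Sp F v lam. hw_vec E H lam w"
    using v_in_Sp nz Ev Hv by (auto simp: hw_vec_def)
  show "\<forall>U'. inv_sub {E, H, F} U' \<and> U' \<subseteq> Sp F v lam \<longrightarrow> U' = {0} \<or> U' = Sp F v lam"
  proof (intro allI impI)
    fix U' assume U': "inv_sub {E, H, F} U' \<and> U' \<subseteq> Sp F v lam"
    show "U' = {0} \<or> U' = Sp F v lam"
    proof (cases "U' = {0}")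
      case True then show ?thesis by simp
    next
      case False
      have sub: "vec.subspace U'" using U' by (simp add: inv_sub_def)
      hence "0 \<in> U'" by (simp add: vec.subspace_0)
      then obtain w where w: "w \<in> U'" "w \<noteq> 0" using False by blast
      have wS: "w \<in> Sp F v lam" using w U' by auto
      have "fp E (Suc lam) w = 0"
        using Sp_E_nil[of w "Suc lam"] wS unfolding Sp_def lessThan_Suc_atMost by simp
      then obtain p where p: "fp E p w = 0" and pmin: "\<And>q. q < p \<Longrightarrow> fp E q w \<noteq> 0"
        using exists_least_iff[of "\<lambda>p. fp E p w = 0"] by blast
      have "p \<noteq> 0" using p w by (cases p) auto
      then obtain q where q: "p = Suc q" by (cases p) auto
      let ?y = "fp E q w"
      have ynz: "?y \<noteq> 0" using pmin q by simp
      have Ey: "E *v ?y = 0" using p q by simp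
      have yU: "?y \<in> U'" using inv_sub_fp[of "{E,H,F}" U' E w q] U' w by auto
      have yS: "?y \<in> Sp F v lam" using inv_sub_fp[OF Sp_inv, of E w q] wS by auto
      obtain c where c: "?y = c *s v" using Sp_Ekill[OF yS Ey] by blast
      have "c \<noteq> 0" using c ynz by auto
      hence "v = inverse c *s ?y" using c by simp
      hence vU: "v \<in> U'" using yU sub by (simp add: vec.subspace_scale)
      have "Sp F v lam \<subseteq> U'"
        unfolding Sp_def
      proof (rule vec.span_minimal[OF _ sub])
        show "(\<lambda>j. fp F j v) ` {..lam} \<subseteq> U'"
          using inv_sub_fp[of "{E,H,F}" U' F v] U' vU by auto
      qed
      then show ?thesis using U' by auto
    qed
  qed
qed

lemma Sp_weight:
  assumes x: "x \<in> Sp F v lam" and Hx: "H *v x = \<nu> *s x"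
  shows "\<exists>k \<alpha>. x = \<alpha> *s fp F k v"
proof -
  obtain \<alpha> where a: "x = (\<Sum>j\<le>lam. \<alpha> j *s fp F j v)" using Sp_rep[OF x] by blast
  let ?c = "\<lambda>j. of_nat lam - 2 * of_nat j :: 'a"
  have h1: "H *v x = (\<Sum>j\<le>lam. \<alpha> j *s (?c j *s fp F j v))"
    unfolding a by (simp only: mv_sum mv_scale H_fp[OF Ev Hv])
  have h2: "\<nu> *s x = (\<Sum>j\<le>lam. \<nu> *s (\<alpha> j *s fp F j v))"
    unfolding a by (rule vec.scale_sum_right)
  have "0 = H *v x - \<nu> *s x" using Hx by simp
  also have "\<dots> = (\<Sum>j\<le>lam. \<alpha> j *s (?c j *s fp F j v)) - (\<Sum>j\<le>lam. \<nu> *s (\<alpha> j *s fp F j v))"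
    by (simp only: h1 h2)
  also have "\<dots> = (\<Sum>j\<le>lam. \<alpha> j *s (?c j *s fp F j v) - \<nu> *s (\<alpha> j *s fp F j v))"
    by (simp only: sum_subtractf)
  finally have "(\<Sum>j\<le>lam. (?c j - \<nu>) *s (\<alpha> j *s fp F j v)) = 0"
    by (simp only: scal_lemma)
  moreover have "\<And>j. j \<in> {..lam} \<Longrightarrow> H *v ((?c j - \<nu>) *s (\<alpha> j *s fp F j v))
      = ?c j *s ((?c j - \<nu>) *s (\<alpha> j *s fp F j v))"
    by (simp only: mv_scale H_fp[OF Ev Hv] vector_smult_assoc mult.commute mult.left_commute)
  moreover have "inj_on ?c {..lam}" by (auto simp: inj_on_def)
  ultimately have z: "\<forall>j\<in>{..lam}. (?c j - \<nu>) *s (\<alpha> j *s fp F j v) = 0"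
    using eig_sum[of "{..lam}" H "\<lambda>j. (?c j - \<nu>) *s (\<alpha> j *s fp F j v)" ?c] by blast
  show ?thesis
  proof (cases "\<exists>k\<in>{..lam}. ?c k = \<nu>")
    case True
    then obtain k where k: "k \<in> {..lam}" "?c k = \<nu>" by blast
    have "x = \<alpha> k *s fp F k v"
      unfolding a
    proof (rule sum_single[OF _ k(1)])
      fix j assume j: "j \<in> {..lam}" "j \<noteq> k"
      hence "?c j \<noteq> \<nu>" using k by auto
      thus "\<alpha> j *s fp F j v = 0" using z j by auto
    qed simp
    thus ?thesis by blast
  next
    case False
    hence "x = 0" unfolding a using z by (intro sum.neutral) auto
    thus ?thesis by (intro exI[of _ 0]) simp
  qed
qed

end

lemma irred_Sp:
  assumes "irred_hw E H F a A"
  obtains u where "E *v u = 0" "H *v u = of_nat a *s u" "u \<noteq> 0" "u \<in> A" "A = Sp F u a"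
proof -
  from assms obtain u where u: "u \<in> A" "hw_vec E H a u" by (auto simp: irred_hw_def)
  hence hu: "E *v u = 0" "H *v u = of_nat a *s u" "u \<noteq> 0" by (auto simp: hw_vec_def)
  have inv: "inv_sub {E, H, F} A" and irr: "\<forall>U'. inv_sub {E, H, F} U' \<and> U' \<subseteq> A \<longrightarrow> U' = {0} \<or> U' = A"
    using assms by (auto simp: irred_hw_def irred_sl2_def)
  have sub: "Sp F u a \<subseteq> A"
    unfolding Sp_def
    using inv_sub_fp[OF inv, of F u] u(1) inv
    by (intro vec.span_minimal) (auto simp: inv_sub_def)
  have "Sp F u a \<noteq> {0}" using v_in_Sp[OF hu] hu(3) by auto
  moreover have "Sp F u a = {0} \<or> Sp F u a = A"
    using irr[rule_format, OF conjI[OF Sp_inv[OF hu] sub]] .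
  ultimately have "A = Sp F u a" by simp
  thus ?thesis using that hu u by blast
qed

end

definition lmul :: "'a::comm_ring_1^'i^'i \<Rightarrow> 'a^('i::finite \<times> 'j::finite) \<Rightarrow> 'a^('i \<times> 'j)" where
  "lmul L T = (\<chi> p. \<Sum>r\<in>UNIV. L $ fst p $ r * T $ (r, snd p))"
definition rmul :: "'a::comm_ring_1^'j^'j \<Rightarrow> 'a^('i::finite \<times> 'j::finite) \<Rightarrow> 'a^('i \<times> 'j)" where
  "rmul R T = (\<chi> p. \<Sum>s\<in>UNIV. R $ snd p $ s * T $ (fst p, s))"
definition col :: "'j \<Rightarrow> 'a^('i::finite \<times> 'j::finite) \<Rightarrow> 'a^'i" where
  "col q T = (\<chi> p. T $ (p, q))"
definition row :: "'i \<Rightarrow> 'a^('i::finite \<times> 'j::finite) \<Rightarrow> 'a^'j" where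
  "row p T = (\<chi> q. T $ (p, q))"

lemma sum_UNIV_pair:
  "(\<Sum>q\<in>(UNIV::('i::finite \<times> 'j::finite) set). h q) = (\<Sum>r\<in>UNIV. \<Sum>s\<in>UNIV. h (r, s))"
  by (simp add: sum.cartesian_product UNIV_Times_UNIV[symmetric] case_prod_unfold del: UNIV_Times_UNIV)

lemma sum_pairs_snd:
  "(\<Sum>q\<in>(UNIV::('i::finite \<times> 'j::finite) set). if snd q = b then f (fst q) else 0) = (\<Sum>r\<in>UNIV. f r)"
  by (simp add: sum_UNIV_pair)

lemma sum_pairs_fst:
  "(\<Sum>q\<in>(UNIV::('i::finite \<times> 'j::finite) set). if fst q = a then f (snd q) else 0) = (\<Sum>s\<in>UNIV. f s)"
  by (simp add: sum_UNIV_pair, subst sum.swap, simp)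

lemma tmat_mv: "tmat A B *v T = lmul A T + rmul B (T::'a::comm_ring_1^('i::finite \<times> 'j::finite))"
proof -
  have "(tmat A B *v T) $ p = lmul A T $ p + rmul B T $ p" for p
  proof -
    have "(tmat A B *v T) $ p = (\<Sum>q\<in>UNIV. (if snd p = snd q then A $ fst p $ fst q else 0) * T $ q)
        + (\<Sum>q\<in>UNIV. (if fst p = fst q then B $ snd p $ snd q else 0) * T $ q)"
      by (simp add: matrix_vector_mult_def tmat_def distrib_right sum.distrib)
    also have "(\<Sum>q\<in>UNIV. (if snd p = snd q then A $ fst p $ fst q else 0) * T $ q)
        = (\<Sum>q\<in>(UNIV::('i \<times> 'j) set). if snd q = snd p then A $ fst p $ fst q * T $ (fst q, snd p) else 0)"
      by (rule sum.cong) auto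
    also have "\<dots> = lmul A T $ p"
      using sum_pairs_snd[of "snd p" "\<lambda>r. A $ fst p $ r * T $ (r, snd p)"] by (simp add: lmul_def)
    also have "(\<Sum>q\<in>UNIV. (if fst p = fst q then B $ snd p $ snd q else 0) * T $ q)
        = (\<Sum>q\<in>(UNIV::('i \<times> 'j) set). if fst q = fst p then B $ snd p $ snd q * T $ (fst p, snd q) else 0)"
      by (rule sum.cong) auto
    also have "\<dots> = rmul B T $ p"
      using sum_pairs_fst[of "fst p" "\<lambda>s. B $ snd p $ s * T $ (fst p, s)"] by (simp add: rmul_def)
    finally show ?thesis .
  qed
  thus ?thesis by (simp add: vec_eq_iff)
qed

lemma col_eq: "(\<forall>q. col q T = col q S) \<longleftrightarrow> T = S"
  by (auto simp: col_def vec_eq_iff)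
lemma row_eq: "(\<forall>p. row p T = row p S) \<longleftrightarrow> T = S"
  by (auto simp: row_def vec_eq_iff)

lemma col_lmul: "col q (lmul L T) = L *v col q T"
  by (simp add: col_def lmul_def matrix_vector_mult_def vec_eq_iff)
lemma row_rmul: "row p (rmul R T) = R *v row p T"
  by (simp add: row_def rmul_def matrix_vector_mult_def vec_eq_iff)
lemma col_add: "col q (T + S) = col q T + col q S" by (simp add: col_def vec_eq_iff)
lemma col_scale: "col q (c *s T) = c *s col q T" by (simp add: col_def vec_eq_iff)
lemma row_add: "row q (T + S) = row q T + row q S" by (simp add: row_def vec_eq_iff)
lemma row_scale: "row q (c *s T) = c *s row q T" by (simp add: row_def vec_eq_iff)

lemma lmul_add: "lmul L (T + S) = lmul L T + lmul L S"
  by (simp add: lmul_def vec_eq_iff distrib_left sum.distrib)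
lemma lmul_scale: "lmul L (c *s T) = c *s lmul L T"
  by (simp add: lmul_def vec_eq_iff sum_distrib_left mult.left_commute)
lemma lmul_zero[simp]: "lmul L 0 = 0"
  by (simp add: lmul_def vec_eq_iff)
lemma lmul_diff: "lmul L (T - S) = lmul L T - lmul L S"
  by (simp add: lmul_def vec_eq_iff right_diff_distrib sum_subtractf)
lemma lmul_sum: "lmul L (\<Sum>i\<in>I. f i) = (\<Sum>i\<in>I. lmul L (f i))"
  by (induction I rule: infinite_finite_induct) (auto simp: lmul_add)
lemma rmul_add: "rmul L (T + S) = rmul L T + rmul L S"
  by (simp add: rmul_def vec_eq_iff distrib_left sum.distrib)
lemma rmul_scale: "rmul L (c *s T) = c *s rmul L T"
  by (simp add: rmul_def vec_eq_iff sum_distrib_left mult.left_commute)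
lemma rmul_zero[simp]: "rmul L 0 = 0"
  by (simp add: rmul_def vec_eq_iff)
lemma rmul_diff: "rmul L (T - S) = rmul L T - rmul L S"
  by (simp add: rmul_def vec_eq_iff right_diff_distrib sum_subtractf)
lemma rmul_sum: "rmul L (\<Sum>i\<in>I. f i) = (\<Sum>i\<in>I. rmul L (f i))"
  by (induction I rule: infinite_finite_induct) (auto simp: rmul_add)

lemma lmul_lmul: "lmul A (lmul B T) = lmul (A ** B) (T::'a::field^('i::finite \<times> 'j::finite))"
  by (rule col_eq[THEN iffD1]) (simp add: col_lmul matrix_vector_mul_assoc)
lemma rmul_rmul: "rmul A (rmul B T) = rmul (A ** B) (T::'a::field^('i::finite \<times> 'j::finite))"
  by (rule row_eq[THEN iffD1]) (simp add: row_rmul matrix_vector_mul_assoc)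
lemma lmul_rmul: "lmul A (rmul B T) = rmul B (lmul A (T::'a::comm_ring_1^('i::finite\<times>'j::finite)))"
proof -
  have "lmul A (rmul B T) $ p = rmul B (lmul A T) $ p" for p
  proof -
    have "lmul A (rmul B T) $ p = (\<Sum>r\<in>UNIV. \<Sum>s\<in>UNIV. A $ fst p $ r * (B $ snd p $ s * T $ (r, s)))"
      by (simp add: lmul_def rmul_def sum_distrib_left)
    also have "\<dots> = (\<Sum>s\<in>UNIV. \<Sum>r\<in>UNIV. A $ fst p $ r * (B $ snd p $ s * T $ (r, s)))"
      by (rule sum.swap)
    also have "\<dots> = rmul B (lmul A T) $ p"
      by (simp add: lmul_def rmul_def sum_distrib_left mult.left_commute)
    finally show ?thesis .
  qed
  thus ?thesis by (simp add: vec_eq_iff)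
qed

lemma lmul_zero_mat[simp]: "lmul 0 T = 0" by (simp add: lmul_def vec_eq_iff)
lemma rmul_zero_mat[simp]: "rmul 0 T = 0" by (simp add: rmul_def vec_eq_iff)

lemma lmul_ext:
  assumes "\<And>v. A *v v = B *v v + c *s (C *v v)"
  shows "lmul A T = lmul B T + c *s lmul C (T::'a::field^('i::finite \<times> 'j::finite))"
  by (rule col_eq[THEN iffD1]) (simp add: col_lmul col_add col_scale assms)
lemma rmul_ext:
  assumes "\<And>v. A *v v = B *v v + c *s (C *v v)"
  shows "rmul A T = rmul B T + c *s rmul C (T::'a::field^('i::finite \<times> 'j::finite))"
  by (rule row_eq[THEN iffD1]) (simp add: row_rmul row_add row_scale assms)

lemma lmul_ext1:
  assumes "\<And>v. A *v v = B *v v"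
  shows "lmul A T = lmul B (T::'a::field^('i::finite \<times> 'j::finite))"
  by (rule col_eq[THEN iffD1]) (simp add: col_lmul assms)
lemma rmul_ext1:
  assumes "\<And>v. A *v v = B *v v"
  shows "rmul A T = rmul B (T::'a::field^('i::finite \<times> 'j::finite))"
  by (rule row_eq[THEN iffD1]) (simp add: row_rmul assms)

lemma tmat_tmat:
  "tmat A B *v (tmat C D *v T) = lmul (A ** C) T + rmul (B ** D) T + lmul A (rmul D T) + lmul C (rmul B (T::'a::field^('i::finite \<times> 'j::finite)))"
  by (simp add: tmat_mv lmul_add rmul_add lmul_lmul rmul_rmul lmul_rmul algebra_simps)

lemma tvec_col: "col q (tvec u w) = w $ q *s (u::'a::comm_ring_1^'i::finite)"
  by (simp add: col_def tvec_def vec_eq_iff mult.commute)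
lemma lmul_tvec: "lmul L (tvec u w) = tvec (L *v u) (w::'a::comm_ring_1^'j::finite)"
  by (simp add: lmul_def tvec_def vec_eq_iff matrix_vector_mult_def sum_distrib_right mult.assoc)
lemma rmul_tvec: "rmul R (tvec u w) = tvec (u::'a::comm_ring_1^'i::finite) (R *v w)"
  by (simp add: rmul_def tvec_def vec_eq_iff matrix_vector_mult_def sum_distrib_left mult.left_commute)

lemma tvec_add1: "tvec (u + u') w = tvec u w + tvec u' (w::'a::comm_ring_1^'j::finite)" by (simp add: tvec_def vec_eq_iff distrib_right)
lemma tvec_add2: "tvec u (w + w') = tvec u w + tvec u (w'::'a::comm_ring_1^'j::finite)" by (simp add: tvec_def vec_eq_iff distrib_left)
lemma tvec_scale1: "tvec (c *s u) w = c *s tvec u (w::'a::comm_ring_1^'j::finite)" by (simp add: tvec_def vec_eq_iff mult.assoc)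
lemma tvec_scale2: "tvec u (c *s w) = c *s tvec u (w::'a::comm_ring_1^'j)" by (simp add: tvec_def vec_eq_iff mult.left_commute)
lemma tvec_zero1[simp]: "tvec 0 w = (0::'a::comm_ring_1^('i::finite\<times>'j::finite))" by (simp add: tvec_def vec_eq_iff)
lemma tvec_zero2[simp]: "tvec u 0 = (0::'a::comm_ring_1^('i::finite\<times>'j::finite))" by (simp add: tvec_def vec_eq_iff)
lemma tvec_diff2: "tvec u (w - w') = tvec u w - tvec u (w'::'a::comm_ring_1^'j)" by (simp add: tvec_def vec_eq_iff right_diff_distrib)
lemma tvec_sum1: "tvec (\<Sum>i\<in>I. f i) w = (\<Sum>i\<in>I. tvec (f i) (w::'a::comm_ring_1^'j::finite))"
  by (induction I rule: infinite_finite_induct) (auto simp: tvec_add1)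
lemma tvec_sum2: "tvec (u::'a::comm_ring_1^'i::finite) (\<Sum>i\<in>I. f i) = (\<Sum>i\<in>I. tvec u (f i::'a^'j::finite))"
  by (induction I rule: infinite_finite_induct) (auto simp: tvec_add2)

lemma mif: "a * ((if P then 1 else 0) * (if Q then 1 else 0)) = (if Q then (if P then a else 0) else (0::'a::comm_ring_1))"
  by simp

lemma tensor_expand:
  "T = (\<Sum>pq\<in>UNIV. T $ pq *s tvec (axis (fst pq) 1) (axis (snd pq) (1::'a::field)))"
proof -
  have "(\<Sum>pq\<in>UNIV. T $ pq *s tvec (axis (fst pq) 1) (axis (snd pq) (1::'a))) $ x = T $ x" for x
    by (simp add: sum_component tvec_def axis_def sum_UNIV_pair mif)
  thus ?thesis by (simp add: vec_eq_iff)
qed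

lemma tsub_gen: "u \<in> A \<Longrightarrow> w \<in> B \<Longrightarrow> tvec u w \<in> tsub A B"
  unfolding tsub_def by (rule vec.span_base) blast

lemma lmul_rmul_tsub:
  assumes "\<And>x. P *v x \<in> A" "\<And>y. Q *v y \<in> B"
  shows "lmul P (rmul Q T) \<in> tsub A (B::('a::field^'j::finite) set)"
proof -
  have "lmul P (rmul Q T) = (\<Sum>pq\<in>UNIV. T $ pq *s tvec (P *v axis (fst pq) 1) (Q *v axis (snd pq) 1))"
    by (subst tensor_expand[of T]) (simp add: lmul_sum rmul_sum lmul_scale rmul_scale lmul_tvec rmul_tvec)
  also have "\<dots> \<in> tsub A B"
    unfolding tsub_def
    by (intro vec.span_sum vec.span_scale vec.span_base) (auto intro: assms)
  finally show ?thesis .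
qed

lemma tmat_tsub_inv:
  assumes "\<And>u. u \<in> A \<Longrightarrow> X *v u \<in> A" "\<And>w. w \<in> B \<Longrightarrow> Y *v w \<in> B" "T \<in> tsub A B"
  shows "tmat X Y *v T \<in> tsub A (B::('a::field^'j::finite) set)"
  unfolding tsub_def
proof (rule span_inv[OF _ assms(3)[unfolded tsub_def]])
  fix g assume "g \<in> {tvec u w |u w. u \<in> A \<and> w \<in> B}"
  then obtain u w where g: "g = tvec u w" "u \<in> A" "w \<in> B" by blast
  have "tmat X Y *v g = tvec (X *v u) w + tvec u (Y *v w)"
    using g by (simp add: tmat_mv lmul_tvec rmul_tvec)
  thus "tmat X Y *v g \<in> vec.span {tvec u w |u w. u \<in> A \<and> w \<in> B}"
    using g assms(1,2) by (simp add: vec.span_add vec.span_base[of _ "{tvec u w |u w. u \<in> A \<and> w \<in> B}"] tsub_gen[unfolded tsub_def])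
qed

lemma sl2_tensor:
  assumes "sl2 E H F" "sl2 E' H' F'"
  shows "sl2 (tmat E E') (tmat H H') (tmat F (F' :: 'a::field_char_0^'j::finite^'j))"
proof -
  interpret a: sl2 E H F by fact
  interpret b: sl2 E' H' F' by fact
  have HE1: "lmul (H ** E) T = lmul (E ** H) T + 2 *s lmul E T" for T :: "'a^('b \<times> 'j)"
    by (rule lmul_ext) (simp add: matrix_vector_mul_assoc[symmetric] a.HE)
  have HE2: "rmul (H' ** E') T = rmul (E' ** H') T + 2 *s rmul E' T" for T :: "'a^('b \<times> 'j)"
    by (rule rmul_ext) (simp add: matrix_vector_mul_assoc[symmetric] b.HE)
  have HF1: "lmul (H ** F) T = lmul (F ** H) T + (-2) *s lmul F T" for T :: "'a^('b \<times> 'j)"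
    by (rule lmul_ext) (simp add: matrix_vector_mul_assoc[symmetric] a.HF)
  have HF2: "rmul (H' ** F') T = rmul (F' ** H') T + (-2) *s rmul F' T" for T :: "'a^('b \<times> 'j)"
    by (rule rmul_ext) (simp add: matrix_vector_mul_assoc[symmetric] b.HF)
  have EF1: "lmul (E ** F) T = lmul (F ** E) T + 1 *s lmul H T" for T :: "'a^('b \<times> 'j)"
    by (rule lmul_ext) (simp add: matrix_vector_mul_assoc[symmetric] a.EF)
  have EF2: "rmul (E' ** F') T = rmul (F' ** E') T + 1 *s rmul H' T" for T :: "'a^('b \<times> 'j)"
    by (rule rmul_ext) (simp add: matrix_vector_mul_assoc[symmetric] b.EF)
  show ?thesis
  proof
    fix T :: "'a^('b \<times> 'j)"
    show "tmat H H' *v (tmat E E' *v T) = tmat E E' *v (tmat H H' *v T) + 2 *s (tmat E E' *v T)"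
      by (simp only: tmat_tmat HE1 HE2) (simp add: tmat_mv lmul_add rmul_add lmul_scale rmul_scale lmul_rmul algebra_simps)
    show "tmat H H' *v (tmat F F' *v T) = tmat F F' *v (tmat H H' *v T) - 2 *s (tmat F F' *v T)"
      by (simp only: tmat_tmat HF1 HF2) (simp add: tmat_mv lmul_add rmul_add lmul_scale rmul_scale lmul_rmul algebra_simps)
    show "tmat E E' *v (tmat F F' *v T) = tmat F F' *v (tmat E E' *v T) + tmat H H' *v T"
      by (simp only: tmat_tmat EF1 EF2) (simp add: tmat_mv lmul_add rmul_add lmul_scale rmul_scale lmul_rmul algebra_simps)
  qed
qed

lemma col_sum: "col q (\<Sum>i\<in>I. f i) = (\<Sum>i\<in>I. col q (f i))"
  by (induction I rule: infinite_finite_induct) (auto simp: col_add col_def vec_eq_iff)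

lemma tmat_tvec: "tmat X Y *v tvec u w = tvec (X *v u) w + tvec u (Y *v (w::'a::field^'j::finite))"
  by (simp add: tmat_mv lmul_tvec rmul_tvec)

locale tpair = V: sl2 E H F + W: sl2 E' H' F'
  for E H F :: "'a::field_char_0^'i::finite^'i" and E' H' F' :: "'a^'j::finite^'j"
begin

context
  fixes u :: "'a^'i" and a :: nat
  assumes Eu: "E *v u = 0" and Hu: "H *v u = of_nat a *s u" and nzu: "u \<noteq> 0"
begin

lemma tvec_indep:
  assumes "(\<Sum>j\<le>a. tvec (fp F j u) (z j)) = (0::'a^('i \<times> 'j))"
  shows "\<forall>j\<le>a. z j = 0"
proof (intro allI impI)
  fix j assume ja: "j \<le> a"
  have "z j $ q = 0" for q
  proof -
    have "(\<Sum>j\<le>a. (z j $ q) *s fp F j u) = col q (\<Sum>j\<le>a. tvec (fp F j u) (z j))"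
      by (simp add: col_sum tvec_col)
    also have "\<dots> = 0" using assms by (simp add: col_def vec_eq_iff)
    finally have "(\<Sum>j\<le>a. (z j $ q) *s fp F j u) = 0" .
    moreover have "\<And>j. j \<in> {..a} \<Longrightarrow> H *v ((z j $ q) *s fp F j u) = (of_nat a - 2 * of_nat j) *s ((z j $ q) *s fp F j u)"
      by (simp only: mv_scale V.H_fp[OF Eu Hu] vector_smult_assoc mult.commute)
    moreover have "inj_on (\<lambda>j. of_nat a - 2 * of_nat j :: 'a) {..a}" by (auto simp: inj_on_def)
    ultimately have "\<forall>j\<in>{..a}. (z j $ q) *s fp F j u = 0"
      using eig_sum[of "{..a}" H "\<lambda>j. (z j $ q) *s fp F j u" "\<lambda>j. of_nat a - 2 * of_nat j"] by blast
    hence "(z j $ q) *s fp F j u = 0" using ja by simp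
    moreover have "fp F j u \<noteq> 0" using V.fp_top(2)[OF Eu Hu nzu ja] .
    ultimately show ?thesis by simp
  qed
  thus "z j = 0" by (simp add: vec_eq_iff)
qed

lemma tsub_rep:
  assumes T: "T \<in> tsub (Sp F u a) B" and B: "vec.subspace B"
  shows "\<exists>w. (\<forall>j. w j \<in> B) \<and> T = (\<Sum>j\<le>a. tvec (fp F j u) (w j))"
  using T unfolding tsub_def
proof (induction rule: vec.span_induct_alt)
  case base
  show ?case using B by (intro exI[of _ "\<lambda>_. 0"]) (simp add: vec.subspace_0)
next
  case (step c g y)
  then obtain w where w: "\<forall>j. w j \<in> B" "y = (\<Sum>j\<le>a. tvec (fp F j u) (w j))" by blast
  from step obtain x y' where g: "g = tvec x y'" "x \<in> Sp F u a" "y' \<in> B" by blast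
  obtain \<alpha> where al: "x = (\<Sum>j\<le>a. \<alpha> j *s fp F j u)" using V.Sp_rep[OF Eu Hu nzu g(2)] by blast
  have "c *s g + y = (\<Sum>j\<le>a. tvec (fp F j u) (c *s (\<alpha> j *s y') + w j))"
    unfolding g(1) al w(2)
    by (simp add: tvec_sum1 tvec_scale1 tvec_add2 tvec_scale2 vec.scale_sum_right sum.distrib)
  moreover have "\<forall>j. c *s (\<alpha> j *s y') + w j \<in> B"
    using B g(3) w(1) by (simp add: vec.subspace_add vec.subspace_scale)
  ultimately show ?case by (intro exI[of _ "\<lambda>j. c *s (\<alpha> j *s y') + w j"]) simp
qed

lemma tE_sum:
  "tmat E E' *v (\<Sum>j\<le>a. tvec (fp F j u) (w j))
     = (\<Sum>j\<le>a. tvec (fp F j u) (E' *v w j + (of_nat (Suc j) * (of_nat a - of_nat j)) *s w (Suc j)))"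
proof -
  let ?c = "\<lambda>j. (of_nat (Suc j) * (of_nat a - of_nat j) :: 'a)"
  have "tmat E E' *v (\<Sum>j\<le>a. tvec (fp F j u) (w j))
      = (\<Sum>j\<le>a. tvec (E *v fp F j u) (w j)) + (\<Sum>j\<le>a. tvec (fp F j u) (E' *v w j))"
    by (simp add: mv_sum tmat_tvec sum.distrib)
  also have "(\<Sum>j\<le>a. tvec (E *v fp F j u) (w j)) = (\<Sum>j\<le>a. tvec (fp F j u) (?c j *s w (Suc j)))"
  proof -
    have "(\<Sum>j\<le>a. tvec (E *v fp F j u) (w j)) = (\<Sum>j<Suc a. tvec (E *v fp F j u) (w j))"
      by (simp add: lessThan_Suc_atMost)
    also have "\<dots> = tvec (E *v fp F 0 u) (w 0) + (\<Sum>j<a. tvec (E *v fp F (Suc j) u) (w (Suc j)))"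
      by (rule sum.lessThan_Suc_shift)
    also have "\<dots> = (\<Sum>j<a. tvec (fp F j u) (?c j *s w (Suc j)))"
      using Eu by (simp add: V.E_fp[OF Eu Hu] tvec_scale1 tvec_scale2 del: fp_Suc)
    also have "\<dots> = (\<Sum>j<Suc a. tvec (fp F j u) (?c j *s w (Suc j)))"
      by simp
    also have "\<dots> = (\<Sum>j\<le>a. tvec (fp F j u) (?c j *s w (Suc j)))"
      by (simp add: lessThan_Suc_atMost)
    finally show ?thesis .
  qed
  finally show ?thesis by (simp add: sum.distrib[symmetric] tvec_add2 add.commute)
qed

lemma tH_sum:
  "tmat H H' *v (\<Sum>j\<le>a. tvec (fp F j u) (w j))
     = (\<Sum>j\<le>a. tvec (fp F j u) ((of_nat a - 2 * of_nat j) *s w j + H' *v w j))"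
  by (simp only: mv_sum tmat_tvec V.H_fp[OF Eu Hu] tvec_scale1 tvec_scale2 tvec_add2)

lemma Ekill_coeffs:
  assumes "tmat E E' *v (\<Sum>j\<le>a. tvec (fp F j u) (w j)) = 0" and "w 0 = 0"
  shows "\<forall>j\<le>a. w j = 0"
proof -
  have c: "\<forall>j\<le>a. E' *v w j + (of_nat (Suc j) * (of_nat a - of_nat j)) *s w (Suc j) = 0"
    using tvec_indep[of "\<lambda>j. E' *v w j + (of_nat (Suc j) * (of_nat a - of_nat j)) *s w (Suc j)"] assms(1)
    unfolding tE_sum by blast
  show ?thesis
  proof (intro allI impI)
    fix j assume "j \<le> a"
    thus "w j = 0"
    proof (induction j)
      case 0 then show ?case using assms(2) by simp
    next
      case (Suc j)
      hence wj: "w j = 0" by simp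
      have "E' *v w j + (of_nat (Suc j) * (of_nat a - of_nat j) :: 'a) *s w (Suc j) = 0"
        using c[rule_format, of j] Suc.prems by (simp only: Suc_leD)
      hence "(of_nat (Suc j) * (of_nat a - of_nat j) :: 'a) *s w (Suc j) = 0"
        using wj by (simp only: matrix_vector_mult_0_right add_0_left)
      moreover have "(of_nat (Suc j) * (of_nat a - of_nat j) :: 'a) \<noteq> 0"
      proof -
        have n1: "(of_nat (Suc j) :: 'a) \<noteq> 0" by (simp only: of_nat_eq_0_iff)
        have n2: "(of_nat a - of_nat j :: 'a) \<noteq> 0" using Suc.prems by simp
        show ?thesis using n1 n2 by (simp only: mult_eq_0_iff) simp
      qed
      ultimately show ?case by (metis vec.scale_eq_0_iff)
    qed
  qed
qed

lemma weight_coeff0: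
  assumes "tmat H H' *v (\<Sum>j\<le>a. tvec (fp F j u) (w j)) = \<mu> *s (\<Sum>j\<le>a. tvec (fp F j u) (w j))"
  shows "H' *v w 0 = (\<mu> - of_nat a) *s w 0"
proof -
  have "(\<Sum>j\<le>a. tvec (fp F j u) (((of_nat a - 2 * of_nat j) *s w j + H' *v w j) - \<mu> *s w j)) = 0"
    using assms unfolding tH_sum
    by (simp add: tvec_diff2 sum_subtractf vec.scale_sum_right tvec_scale2)
  hence "((of_nat a - 2 * of_nat 0) *s w 0 + H' *v w 0) - \<mu> *s w 0 = 0"
    using tvec_indep[of "\<lambda>j. ((of_nat a - 2 * of_nat j) *s w j + H' *v w j) - \<mu> *s w j"] by blast
  thus ?thesis by (simp add: vec.scale_left_diff_distrib algebra_simps)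
qed

end

lemma mult_one:
  assumes A: "irred_hw E H F a A" and B: "irred_hw E' H' F' b B"
    and T1: "T1 \<in> tsub A B" "tmat E E' *v T1 = 0" "tmat H H' *v T1 = \<mu> *s T1" "T1 \<noteq> 0"
    and T2: "T2 \<in> tsub A B" "tmat E E' *v T2 = 0" "tmat H H' *v T2 = \<mu> *s T2"
  shows "\<exists>c. T2 = c *s T1"
proof -
  obtain u where u: "E *v u = 0" "H *v u = of_nat a *s u" "u \<noteq> 0" "u \<in> A" "A = Sp F u a"
    using V.irred_Sp[OF A] by blast
  obtain u' where u': "E' *v u' = 0" "H' *v u' = of_nat b *s u'" "u' \<noteq> 0" "u' \<in> B" "B = Sp F' u' b"
    using W.irred_Sp[OF B] by blast
  have Bsub: "vec.subspace B" using u'(5) by (simp add: Sp_def)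
  obtain w1 where w1: "\<forall>j. w1 j \<in> B" "T1 = (\<Sum>j\<le>a. tvec (fp F j u) (w1 j))"
    using tsub_rep[OF u(1-3) _ Bsub] T1(1) u(5) by blast
  obtain w2 where w2: "\<forall>j. w2 j \<in> B" "T2 = (\<Sum>j\<le>a. tvec (fp F j u) (w2 j))"
    using tsub_rep[OF u(1-3) _ Bsub] T2(1) u(5) by blast
  have h1: "H' *v w1 0 = (\<mu> - of_nat a) *s w1 0"
    using weight_coeff0[OF u(1-3)] T1(3) w1(2) by blast
  have h2: "H' *v w2 0 = (\<mu> - of_nat a) *s w2 0"
    using weight_coeff0[OF u(1-3)] T2(3) w2(2) by blast
  have w10: "w1 0 \<noteq> 0"
  proof
    assume "w1 0 = 0"
    hence "\<forall>j\<le>a. w1 j = 0" using Ekill_coeffs[OF u(1-3)] T1(2) w1(2) by blast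
    hence "T1 = 0" unfolding w1(2) by simp
    thus False using T1(4) by simp
  qed
  obtain k \<alpha> where k: "w1 0 = \<alpha> *s fp F' k u'"
    using W.Sp_weight[OF u'(1-3), of "w1 0" "\<mu> - of_nat a"] h1 w1(1) u'(5) by blast
  obtain k' \<beta> where k': "w2 0 = \<beta> *s fp F' k' u'"
    using W.Sp_weight[OF u'(1-3), of "w2 0" "\<mu> - of_nat a"] h2 w2(1) u'(5) by blast
  have "\<exists>c. w2 0 = c *s w1 0"
  proof (cases "w2 0 = 0")
    case True then show ?thesis by (intro exI[of _ 0]) simp
  next
    case False
    have an: "\<alpha> \<noteq> 0" "fp F' k u' \<noteq> 0" using w10 k by auto
    have bn: "\<beta> \<noteq> 0" "fp F' k' u' \<noteq> 0" using False k' by auto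
    have "H' *v w1 0 = (of_nat b - 2 * of_nat k) *s w1 0"
      unfolding k by (simp only: mv_scale W.H_fp[OF u'(1,2)] vector_smult_assoc mult.commute)
    hence e1: "(\<mu> - of_nat a) = (of_nat b - 2 * of_nat k :: 'a)"
      using h1 w10 scale_cancel by metis
    have "H' *v w2 0 = (of_nat b - 2 * of_nat k') *s w2 0"
      unfolding k' by (simp only: mv_scale W.H_fp[OF u'(1,2)] vector_smult_assoc mult.commute)
    hence e2: "(\<mu> - of_nat a) = (of_nat b - 2 * of_nat k' :: 'a)"
      using h2 False scale_cancel by metis
    have "k = k'" using e1 e2 by simp
    hence "w2 0 = (\<beta> / \<alpha>) *s w1 0" using k k' an by simp
    thus ?thesis by blast
  qed
  then obtain c where c: "w2 0 = c *s w1 0" by blast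
  let ?d = "\<lambda>j. w2 j - c *s w1 j"
  have D: "T2 - c *s T1 = (\<Sum>j\<le>a. tvec (fp F j u) (?d j))"
    unfolding w1(2) w2(2)
    by (simp add: tvec_diff2 tvec_scale2 sum_subtractf vec.scale_sum_right)
  have "tmat E E' *v (T2 - c *s T1) = 0"
    using T1(2) T2(2) by (simp add: matrix_vector_mult_diff_distrib mv_scale)
  hence "\<forall>j\<le>a. ?d j = 0" using Ekill_coeffs[OF u(1-3), of ?d] c unfolding D by simp
  hence "T2 - c *s T1 = 0" unfolding D by simp
  thus ?thesis by (intro exI[of _ c]) simp
qed

end

definition proj :: "(nat \<Rightarrow> ('a::field^'n) set) \<Rightarrow> nat \<Rightarrow> nat \<Rightarrow> 'a^'n \<Rightarrow> 'a^'n" where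
  "proj A l i v = (THE u. (\<forall>i\<le>l. u i \<in> A i) \<and> (\<forall>i>l. u i = 0) \<and> v = (\<Sum>i\<le>l. u i)) i"

lemma span_Un_subspaces:
  assumes "vec.subspace S" "vec.subspace T" "w \<in> vec.span (S \<union> T)"
  shows "\<exists>x y. x \<in> S \<and> y \<in> T \<and> w = x + y"
  using assms vec.span_Un[of S T] by (auto simp: vec.span_eq_iff[THEN iffD2])

lemma span_vanish:
  assumes "Vector_Spaces.linear ((*s)) ((*s)) f" "\<And>x. x \<in> S \<Longrightarrow> f x = 0" "x \<in> vec.span S"
  shows "f x = 0"
  using assms(3)
proof (induction rule: vec.span_induct_alt)
  case base
  have "f (0 *s 0) = 0 *s f 0" using assms(1) by (simp only: Vector_Spaces.linear_iff)
  then show ?case by simp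
next
  case (step c x y)
  have "f (c *s x + y) = c *s f x + f y" using assms(1) by (simp add: Vector_Spaces.linear_iff)
  then show ?case using step assms(2) by simp
qed

locale dsum =
  fixes A :: "nat \<Rightarrow> ('a::field^'n::finite) set" and l :: nat
  assumes ds: "is_dsum A l UNIV" and subs: "\<And>i. i \<le> l \<Longrightarrow> vec.subspace (A i)"
begin

abbreviation "P \<equiv> proj A l"

lemma P_prop: "(\<forall>i\<le>l. P i v \<in> A i) \<and> (\<forall>i>l. P i v = 0) \<and> v = (\<Sum>i\<le>l. P i v)"
proof -
  have ex: "\<exists>!u. (\<forall>i\<le>l. u i \<in> A i) \<and> (\<forall>i>l. u i = 0) \<and> v = (\<Sum>i\<le>l. u i)"
    using ds by (simp add: is_dsum_def)
  show ?thesis unfolding proj_def using theI'[OF ex] by simp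
qed

lemma P_mem: "i \<le> l \<Longrightarrow> P i v \<in> A i" using P_prop by blast
lemma P_out: "l < i \<Longrightarrow> P i v = 0" using P_prop by blast
lemma P_sum: "v = (\<Sum>i\<le>l. P i v)" using P_prop by blast

lemma P_uniq:
  assumes "\<forall>i\<le>l. u i \<in> A i" "\<forall>i>l. u i = 0" "v = (\<Sum>i\<le>l. u i)"
  shows "P i v = u i"
proof -
  have ex: "\<exists>!u. (\<forall>i\<le>l. u i \<in> A i) \<and> (\<forall>i>l. u i = 0) \<and> v = (\<Sum>i\<le>l. u i)"
    using ds by (simp add: is_dsum_def)
  have "(THE u. (\<forall>i\<le>l. u i \<in> A i) \<and> (\<forall>i>l. u i = 0) \<and> v = (\<Sum>i\<le>l. u i)) = u"
    by (rule the1_equality[OF ex]) (use assms in blast)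
  thus ?thesis by (simp add: proj_def)
qed

lemma P_add: "P i (v + w) = P i v + P i w"
proof (rule P_uniq)
  show "\<forall>i\<le>l. P i v + P i w \<in> A i" using P_mem subs by (simp add: vec.subspace_add)
  show "\<forall>i>l. P i v + P i w = 0" using P_out by simp
  show "v + w = (\<Sum>i\<le>l. P i v + P i w)" using P_sum[of v] P_sum[of w] by (simp add: sum.distrib)
qed

lemma P_scale: "P i (c *s v) = c *s P i v"
proof (rule P_uniq)
  show "\<forall>i\<le>l. c *s P i v \<in> A i" using P_mem subs by (simp add: vec.subspace_scale)
  show "\<forall>i>l. c *s P i v = 0" using P_out by simp
  have "c *s v = c *s (\<Sum>i\<le>l. P i v)" using P_sum[of v] by simp
  thus "c *s v = (\<Sum>i\<le>l. c *s P i v)" by (simp only: vec.scale_sum_right)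
qed

lemma P_zero[simp]: "P i 0 = 0"
  using P_scale[of i 0 0] by simp

lemma P_diff: "P i (v - w) = P i v - P i w"
  using P_add[of i "v - w" w] by (simp add: algebra_simps)

lemma P_linear: "Vector_Spaces.linear ((*s)) ((*s)) (P i)"
  unfolding Vector_Spaces.linear_iff using P_add P_scale vec.vector_space_axioms by blast

lemma P_self: "j \<le> l \<Longrightarrow> v \<in> A j \<Longrightarrow> P i v = (if i = j then v else 0)"
  by (rule P_uniq) (auto simp: subs vec.subspace_0)

lemma P_vanish: "x \<in> vec.span (\<Union>j\<in>J. A j) \<Longrightarrow> J \<subseteq> {..l} \<Longrightarrow> i \<notin> J \<Longrightarrow> P i x = 0"
  by (rule span_vanish[OF P_linear]) (auto simp: P_self)

definition Pm :: "nat \<Rightarrow> 'a^'n^'n" where "Pm i = matrix (P i)"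

lemma Pm_mv: "Pm i *v v = P i v"
  unfolding Pm_def by (rule matrix_works[OF P_linear])

lemma P_comm:
  assumes "\<And>i v. i \<le> l \<Longrightarrow> v \<in> A i \<Longrightarrow> X *v v \<in> A i"
  shows "P i (X *v v) = X *v P i v"
proof (rule P_uniq)
  show "\<forall>i\<le>l. X *v P i v \<in> A i" using P_mem assms by blast
  show "\<forall>i>l. X *v P i v = 0" using P_out by simp
  have "X *v v = X *v (\<Sum>i\<le>l. P i v)" using P_sum[of v] by simp
  thus "X *v v = (\<Sum>i\<le>l. X *v P i v)" by (simp only: mv_sum)
qed

lemma Pm_comm:
  assumes "\<And>i v. i \<le> l \<Longrightarrow> v \<in> A i \<Longrightarrow> X *v v \<in> A i"
  shows "Pm i ** X = X ** Pm i"
  by (simp add: matrix_eq matrix_vector_mul_assoc[symmetric] Pm_mv P_comm[OF assms])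

end

locale dmod =
  fixes m :: nat and M :: "('a::field_char_0, 'n::finite) gmod" and l :: nat
    and a :: "nat \<Rightarrow> nat" and A :: "nat \<Rightarrow> ('a^'n) set"
  assumes gm: "is_gm_module m M" and sd: "socle_decomp m M l a A"
begin

abbreviation "E \<equiv> gE M"
abbreviation "H \<equiv> gH M"
abbreviation "F \<equiv> gF M"
abbreviation "X \<equiv> gX M"

lemma irrA: "i \<le> l \<Longrightarrow> irred_hw E H F (a i) (A i)"
  using sd by (simp add: socle_decomp_def)

lemma invA: "i \<le> l \<Longrightarrow> inv_sub {E, H, F} (A i)"
  using irrA by (simp add: irred_hw_def irred_sl2_def)

lemma subA: "i \<le> l \<Longrightarrow> vec.subspace (A i)"
  using invA by (simp add: inv_sub_def)

lemma soc_eq: "k \<le> Suc l \<Longrightarrow> soc m M k = vec.span (\<Union>i<k. A i)"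
  using sd by (simp add: socle_decomp_def)

sublocale dsum A l
  using sd subA by unfold_locales (auto simp: socle_decomp_def)

lemma sl2: "sl2 E H F"
proof
  have r: "br H E = msc 2 E" "br H F = msc (-2) F" "br E F = H"
    using gm by (auto simp: is_gm_module_def)
  fix v
  show "H *v (E *v v) = E *v (H *v v) + 2 *s (E *v v)"
    using arg_cong[OF r(1), of "\<lambda>B. B *v v"] by (simp add: br_mv msc_mv algebra_simps)
  show "H *v (F *v v) = F *v (H *v v) - 2 *s (F *v v)"
    using arg_cong[OF r(2), of "\<lambda>B. B *v v"] by (simp add: br_mv msc_mv algebra_simps)
  show "E *v (F *v v) = F *v (E *v v) + H *v v"
    using arg_cong[OF r(3), of "\<lambda>B. B *v v"] by (simp add: br_mv algebra_simps)
qed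

lemma XE: "k \<le> m \<Longrightarrow> X k *v (E *v v) = E *v (X k *v v) - (if k = 0 then 0 else of_nat (k * (m - k + 1)) *s (X (k - 1) *v v))"
proof -
  assume k: "k \<le> m"
  have "br E (X k) = (if k = 0 then 0 else msc (of_nat (k * (m - k + 1))) (X (k - 1)))"
    using gm k by (simp add: is_gm_module_def)
  from arg_cong[OF this, of "\<lambda>B. B *v v"] show ?thesis
    by (cases "k = 0") (simp_all add: br_mv msc_mv algebra_simps)
qed

lemma XH: "k \<le> m \<Longrightarrow> X k *v (H *v v) = H *v (X k *v v) - of_int (int m - 2 * int k) *s (X k *v v)"
proof -
  assume k: "k \<le> m"
  have "br H (X k) = msc (of_int (int m - 2 * int k)) (X k)"
    using gm k by (simp add: is_gm_module_def)
  from arg_cong[OF this, of "\<lambda>B. B *v v"] show ?thesis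
    by (simp add: br_mv msc_mv algebra_simps)
qed

lemma XF: "k \<le> m \<Longrightarrow> X k *v (F *v v) = F *v (X k *v v) - (if k = m then 0 else X (Suc k) *v v)"
proof -
  assume k: "k \<le> m"
  have "br F (X k) = (if k = m then 0 else X (Suc k))"
    using gm k by (simp add: is_gm_module_def)
  from arg_cong[OF this, of "\<lambda>B. B *v v"] show ?thesis
    by (cases "k = m") (simp_all add: br_mv algebra_simps)
qed

lemma P_commE: "P i (E *v v) = E *v P i v"
  by (rule P_comm) (use invA in \<open>auto simp: inv_sub_def\<close>)
lemma P_commH: "P i (H *v v) = H *v P i v"
  by (rule P_comm) (use invA in \<open>auto simp: inv_sub_def\<close>)
lemma P_commF: "P i (F *v v) = F *v P i v"
  by (rule P_comm) (use invA in \<open>auto simp: inv_sub_def\<close>)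

lemma gsub_soc: "gsub m M (soc m M k)"
proof (induction k)
  case 0
  have "soc m M 0 = vec.span {}" by (simp add: soc_def)
  then show ?case unfolding gsub_def inv_sub_def by simp
next
  case (Suc k)
  let ?N = "soc m M k"
  let ?S = "?N \<union> \<Union>{U. gsub m M U \<and> ?N \<subset> U \<and>
       (\<forall>U'. gsub m M U' \<and> ?N \<subseteq> U' \<and> U' \<subseteq> U \<longrightarrow> U' = ?N \<or> U' = U)}"
  have eq: "soc m M (Suc k) = vec.span ?S" by (simp add: soc_def socle_step_def)
  have "\<forall>B\<in>gm_ops m M. \<forall>x\<in>vec.span ?S. B *v x \<in> vec.span ?S"
  proof (intro ballI)
    fix B x assume B: "B \<in> gm_ops m M" and x: "x \<in> vec.span ?S"
    show "B *v x \<in> vec.span ?S"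
    proof (rule span_inv[OF _ x])
      fix g assume "g \<in> ?S"
      hence "B *v g \<in> ?S" using B Suc.IH by (auto simp: gsub_def inv_sub_def)
      thus "B *v g \<in> vec.span ?S" by (rule vec.span_base)
    qed
  qed
  then show ?case unfolding eq gsub_def inv_sub_def by simp
qed

lemma soc_Suc: "soc m M (Suc k) = socle_step m M (soc m M k)"
  by (simp add: soc_def)

lemma VL:
  assumes i: "1 \<le> i" "i \<le> l" and v: "v \<in> A i" and z: "\<forall>k\<le>m. P (i - 1) (X k *v v) = 0"
  shows "v = 0"
proof -
  let ?K = "{v \<in> A i. \<forall>k\<le>m. P (i - 1) (X k *v v) = 0}"
  have Ksub: "vec.subspace ?K"
    unfolding vec.subspace_def
    using subA[OF i(2)]
    by (auto simp: vec.subspace_0 vec.subspace_add vec.subspace_scale matrix_vector_right_distrib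
        mv_scale P_add P_scale)
  have Kinv: "inv_sub {E, H, F} ?K"
    unfolding inv_sub_def
  proof (intro conjI Ksub ballI)
    fix B w assume B: "B \<in> {E, H, F}" and w: "w \<in> ?K"
    have BA: "B *v w \<in> A i" using invA[OF i(2)] B w by (auto simp: inv_sub_def)
    have "P (i - 1) (X k *v (B *v w)) = 0" if k: "k \<le> m" for k
    proof -
      have wk: "P (i - 1) (X k *v w) = 0" using w k by simp
      consider "B = E" | "B = H" | "B = F" using B by blast
      then show ?thesis
      proof cases
        case 1
        have w1: "P (i - 1) (X (k - 1) *v w) = 0" using w k by simp
        show ?thesis
        proof (cases "k = 0")
          case True
          hence "X k *v (E *v w) = E *v (X k *v w)" using XE[OF k, of w] by simp
          thus ?thesis using 1 wk by (simp add: P_commE)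
        next
          case False
          hence "X k *v (E *v w) = E *v (X k *v w) - of_nat (k * (m - k + 1)) *s (X (k - 1) *v w)"
            using XE[OF k, of w] by simp
          hence "P (i - 1) (X k *v (E *v w)) = E *v P (i - 1) (X k *v w) - of_nat (k * (m - k + 1)) *s P (i - 1) (X (k - 1) *v w)"
            by (simp only: P_diff P_commE P_scale)
          thus ?thesis using 1 wk w1 by simp
        qed
      next
        case 2
        have "P (i - 1) (X k *v (H *v w)) = H *v P (i - 1) (X k *v w)
            - of_int (int m - 2 * int k) *s P (i - 1) (X k *v w)"
          by (simp only: XH[OF k] P_diff P_commH P_scale)
        then show ?thesis using 2 wk by simp
      next
        case 3
        have w1: "k \<noteq> m \<Longrightarrow> P (i - 1) (X (Suc k) *v w) = 0" using w k by simp
        show ?thesis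
        proof (cases "k = m")
          case True
          hence "X k *v (F *v w) = F *v (X k *v w)" using XF[OF k, of w] by simp
          thus ?thesis using 3 wk by (simp add: P_commF)
        next
          case False
          hence "X k *v (F *v w) = F *v (X k *v w) - X (Suc k) *v w"
            using XF[OF k, of w] by simp
          hence "P (i - 1) (X k *v (F *v w)) = F *v P (i - 1) (X k *v w) - P (i - 1) (X (Suc k) *v w)"
            by (simp only: P_diff P_commF)
          thus ?thesis using 3 wk w1 False by simp
        qed
      qed
    qed
    thus "B *v w \<in> ?K" using BA by simp
  qed
  have "?K = {0} \<or> ?K = A i"
    using irrA[OF i(2)] Kinv unfolding irred_hw_def irred_sl2_def by blast
  moreover have "?K \<noteq> A i"
  proof
    assume KA: "?K = A i"
    let ?N = "soc m M (i - 1)"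
    let ?U = "vec.span (?N \<union> A i)"
    have Neq: "?N = vec.span (\<Union>j<i - 1. A j)" using soc_eq[of "i - 1"] i by simp
    have Nsub: "vec.subspace ?N" using Neq by simp
    have Ng: "gsub m M ?N" by (rule gsub_soc)
    have soci: "soc m M i = vec.span (\<Union>j<i. A j)" using soc_eq[of i] i by simp
    have socSi: "soc m M (Suc i) = vec.span (\<Union>j<Suc i. A j)" using soc_eq[of "Suc i"] i by simp
    have Ug: "gsub m M ?U"
      unfolding gsub_def inv_sub_def
    proof (intro conjI ballI)
      show "vec.subspace ?U" by simp
      fix B x assume B: "B \<in> gm_ops m M" and x: "x \<in> ?U"
      show "B *v x \<in> ?U"
      proof (rule span_inv[OF _ x])
        fix g assume g: "g \<in> ?N \<union> A i"
        show "B *v g \<in> ?U"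
        proof (cases "g \<in> ?N")
          case True
          hence "B *v g \<in> ?N" using Ng B by (auto simp: gsub_def inv_sub_def)
          thus ?thesis by (intro vec.span_base) simp
        next
          case False
          hence gA: "g \<in> A i" using g by simp
          show ?thesis
          proof (cases "B \<in> {E, H, F}")
            case True
            hence "B *v g \<in> A i" using invA[OF i(2)] gA by (auto simp: inv_sub_def)
            thus ?thesis by (intro vec.span_base) simp
          next
            case False
            then obtain k where k: "k \<le> m" "B = X k" using B by (auto simp: gm_ops_def)
            let ?y = "X k *v g"
            have "g \<in> soc m M (Suc i)" unfolding socSi using gA by (intro vec.span_base) auto
            hence yS: "?y \<in> vec.span (\<Union>j<Suc i. A j)"
              using gsub_soc[of "Suc i"] k socSi by (auto simp: gsub_def inv_sub_def gm_ops_def)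
            have "P j ?y \<in> ?U" if j: "j \<le> l" for j
            proof -
              consider "j < i - 1" | "j = i - 1" | "j = i" | "i < j" by linarith
              then show ?thesis
              proof cases
                case 1
                hence "P j ?y \<in> ?N" unfolding Neq using P_mem[OF j] by (intro vec.span_base) auto
                thus ?thesis by (intro vec.span_base) simp
              next
                case 2
                hence "P j ?y = 0" using KA gA k by auto
                thus ?thesis by (simp add: vec.span_zero)
              next
                case 3
                thus ?thesis using P_mem[OF j] by (intro vec.span_base) simp
              next
                case 4
                have "P j ?y = 0" by (rule P_vanish[OF yS]) (use 4 i in auto)
                thus ?thesis by (simp add: vec.span_zero)
              qed
            qed
            hence "(\<Sum>j\<le>l. P j ?y) \<in> ?U" by (intro vec.span_sum) auto
            thus ?thesis using P_sum[of ?y] k by simp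
          qed
        qed
      qed
    qed
    have Umin: "\<forall>U'. gsub m M U' \<and> ?N \<subseteq> U' \<and> U' \<subseteq> ?U \<longrightarrow> U' = ?N \<or> U' = ?U"
    proof (intro allI impI)
      fix U' assume U': "gsub m M U' \<and> ?N \<subseteq> U' \<and> U' \<subseteq> ?U"
      have U'sub: "vec.subspace U'" using U' by (simp add: gsub_def inv_sub_def)
      let ?K' = "U' \<inter> A i"
      have "inv_sub {E, H, F} ?K'"
        using U' invA[OF i(2)] subA[OF i(2)]
        by (auto simp: gsub_def inv_sub_def gm_ops_def vec.subspace_inter)
      hence "?K' = {0} \<or> ?K' = A i"
        using irrA[OF i(2)] unfolding irred_hw_def irred_sl2_def by blast
      thus "U' = ?N \<or> U' = ?U"
      proof
        assume "?K' = A i"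
        hence "?N \<union> A i \<subseteq> U'" using U' by auto
        hence "?U \<subseteq> U'" using U'sub by (rule vec.span_minimal)
        thus ?thesis using U' by auto
      next
        assume K0: "?K' = {0}"
        have "U' \<subseteq> ?N"
        proof
          fix w assume w: "w \<in> U'"
          then obtain x y where xy: "x \<in> ?N" "y \<in> A i" "w = x + y"
            using span_Un_subspaces[OF Nsub subA[OF i(2)]] U' by blast
          have "y = w - x" using xy by simp
          hence "y \<in> U'" using w xy(1) U' U'sub by (auto intro: vec.subspace_diff)
          hence "y = 0" using K0 xy(2) by auto
          thus "w \<in> ?N" using xy by simp
        qed
        thus ?thesis using U' by auto
      qed
    qed
    have "A i \<subseteq> soc m M i"
    proof (cases "?N = ?U")
      case True
      have "A i \<subseteq> ?U" by (rule subset_trans[OF _ vec.span_superset]) simp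
      also have "\<dots> = ?N" using True by simp
      also have "\<dots> \<subseteq> soc m M i" unfolding Neq soci
        by (intro vec.span_mono UN_mono) auto
      finally show ?thesis .
    next
      case False
      have "?N \<subseteq> ?U" by (rule subset_trans[OF _ vec.span_superset]) simp
      hence "?N \<subset> ?U" using False by auto
      hence "?U \<subseteq> socle_step m M ?N"
        unfolding socle_step_def using Ug Umin
        by (intro subset_trans[OF _ vec.span_superset]) blast
      also have "socle_step m M ?N = soc m M i" using soc_Suc[of "i - 1"] i by simp
      finally show ?thesis by (rule subset_trans[rotated]) (rule subset_trans[OF _ vec.span_superset], simp)
    qed
    moreover have "A i \<noteq> {0}" using irrA[OF i(2)] by (simp add: irred_hw_def irred_sl2_def)
    moreover have "0 \<in> A i" using subA[OF i(2)] by (simp add: vec.subspace_0)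
    ultimately obtain z where z: "z \<in> A i" "z \<noteq> 0" "z \<in> soc m M i" by blast
    have "P i z = 0" by (rule P_vanish[of z "{..<i}"]) (use z soci i in auto)
    moreover have "P i z = z" using P_self[OF i(2) z(1)] by simp
    ultimately show False using z by simp
  qed
  ultimately have "?K = {0}" by blast
  thus ?thesis using v z by auto
qed

end

locale twomod = VM: dmod m M l a A + VN: dmod m N l' b B
  for m :: nat and M :: "('a::field_char_0, 'i::finite) gmod" and l a A
    and N :: "('a, 'j::finite) gmod" and l' b B
begin

definition Comp :: "nat \<Rightarrow> 'a^('i \<times> 'j) \<Rightarrow> nat \<Rightarrow> 'a^('i \<times> 'j)" where
  "Comp t T i = lmul (VM.Pm i) (rmul (VN.Pm (t - i)) T)"

definition Spn :: "nat \<Rightarrow> ('a^('i \<times> 'j)) set" where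
  "Spn t = vec.span (\<Union>{tsub (A i) (B j) | i j. i \<le> l \<and> j \<le> l' \<and> i + j = t})"

lemma Comp_add: "Comp t (T + S) i = Comp t T i + Comp t S i"
  by (simp add: Comp_def lmul_add rmul_add)
lemma Comp_scale: "Comp t (c *s T) i = c *s Comp t T i"
  by (simp add: Comp_def lmul_scale rmul_scale)
lemma Comp_diff: "Comp t (T - S) i = Comp t T i - Comp t S i"
  by (simp add: Comp_def lmul_diff rmul_diff)
lemma Comp_zero[simp]: "Comp t 0 i = 0"
  by (simp add: Comp_def)

lemma col_zero[simp]: "col q 0 = 0" by (simp add: col_def vec_eq_iff)
lemma row_zero[simp]: "row q 0 = 0" by (simp add: row_def vec_eq_iff)

lemma lmul_Pm_out: "l < i \<Longrightarrow> lmul (VM.Pm i) T = 0"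
  by (rule col_eq[THEN iffD1]) (simp add: col_lmul VM.Pm_mv VM.P_out)
lemma rmul_Pm_out: "l' < j \<Longrightarrow> rmul (VN.Pm j) T = 0"
  by (rule row_eq[THEN iffD1]) (simp add: row_rmul VN.Pm_mv VN.P_out)

lemma lmul_Pm_tvec: "i0 \<le> l \<Longrightarrow> u \<in> A i0 \<Longrightarrow> lmul (VM.Pm i) (tvec u w) = (if i = i0 then tvec u w else 0)"
  by (simp add: lmul_tvec VM.Pm_mv VM.P_self)
lemma rmul_Pm_tvec: "j0 \<le> l' \<Longrightarrow> w \<in> B j0 \<Longrightarrow> rmul (VN.Pm j) (tvec u w) = (if j = j0 then tvec u w else 0)"
  by (simp add: rmul_tvec VN.Pm_mv VN.P_self)

lemma Comp_props:
  assumes "T \<in> Spn t"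
  shows "(\<forall>i\<le>t. rmul (VN.Pm (t - i)) T = Comp t T i) \<and> (\<forall>i\<le>t. lmul (VM.Pm i) T = Comp t T i)
    \<and> T = (\<Sum>i\<le>t. Comp t T i)"
proof -
  let ?G = "{T. (\<forall>i\<le>t. rmul (VN.Pm (t - i)) T = Comp t T i) \<and> (\<forall>i\<le>t. lmul (VM.Pm i) T = Comp t T i)
    \<and> T = (\<Sum>i\<le>t. Comp t T i)}"
  have Gsub: "vec.subspace ?G"
    unfolding vec.subspace_def
    by (auto simp: rmul_add lmul_add Comp_add rmul_scale lmul_scale Comp_scale sum.distrib
        vec.scale_sum_right[symmetric])
  have gen: "tvec u w \<in> ?G" if i0: "i0 \<le> l" "j0 \<le> l'" "i0 + j0 = t" "u \<in> A i0" "w \<in> B j0" for i0 j0 u w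
  proof -
    have C: "Comp t (tvec u w) i = (if i = i0 then tvec u w else 0)" if "i \<le> t" for i
      using that i0 by (auto simp: Comp_def rmul_Pm_tvec lmul_Pm_tvec)
    have "(\<Sum>i\<le>t. Comp t (tvec u w) i) = (\<Sum>i\<le>t. if i = i0 then tvec u w else 0)"
      by (rule sum.cong) (simp_all add: C)
    also have "\<dots> = tvec u w" using i0 by simp
    finally have s: "tvec u w = (\<Sum>i\<le>t. Comp t (tvec u w) i)" by simp
    show ?thesis using i0 s
      by (auto simp: C rmul_Pm_tvec lmul_Pm_tvec)
  qed
  have "\<Union>{tsub (A i) (B j) | i j. i \<le> l \<and> j \<le> l' \<and> i + j = t} \<subseteq> ?G"
  proof (rule subsetI)
    fix x assume "x \<in> \<Union>{tsub (A i) (B j) | i j. i \<le> l \<and> j \<le> l' \<and> i + j = t}"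
    then obtain i j where ij: "i \<le> l" "j \<le> l'" "i + j = t" and x: "x \<in> tsub (A i) (B j)" by blast
    have "tsub (A i) (B j) \<subseteq> ?G"
      unfolding tsub_def by (rule vec.span_minimal[OF _ Gsub]) (use gen ij in blast)
    thus "x \<in> ?G" using x by blast
  qed
  hence "Spn t \<subseteq> ?G" unfolding Spn_def by (rule vec.span_minimal[OF _ Gsub])
  thus ?thesis using assms by blast
qed

abbreviation "XX k \<equiv> tmat (gX M k) (gX N k)"

lemma S_rel:
  assumes T: "T \<in> Spn t" and X: "XX k *v T = 0" and i: "1 \<le> i" "i \<le> t"
  shows "lmul (VM.Pm (i - 1) ** gX M k) (Comp t T i) + rmul (VN.Pm (t - i) ** gX N k) (Comp t T (i - 1)) = 0"
proof -
  note C = Comp_props[OF T]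
  have "0 = lmul (VM.Pm (i - 1)) (rmul (VN.Pm (t - i)) (XX k *v T))" using X by simp
  also have "\<dots> = lmul (VM.Pm (i - 1) ** gX M k) (rmul (VN.Pm (t - i)) T)
      + rmul (VN.Pm (t - i) ** gX N k) (lmul (VM.Pm (i - 1)) T)"
    by (simp add: tmat_mv lmul_add rmul_add lmul_rmul lmul_lmul rmul_rmul)
  also have "rmul (VN.Pm (t - i)) T = Comp t T i" using C i by simp
  also have "lmul (VM.Pm (i - 1)) T = Comp t T (i - 1)" using C i by simp
  finally show ?thesis by simp
qed

lemma KL_left:
  assumes i: "1 \<le> i" and z: "\<forall>k\<le>m. lmul (VM.Pm (i - 1) ** gX M k) (Comp t T i) = 0"
  shows "Comp t T i = 0"
proof (cases "i \<le> l")
  case False then show ?thesis by (simp add: Comp_def lmul_Pm_out)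
next
  case True
  show ?thesis
  proof (rule col_eq[THEN iffD1], intro allI)
    fix q
    let ?c = "col q (Comp t T i)"
    have cA: "?c \<in> A i" unfolding Comp_def col_lmul VM.Pm_mv using VM.P_mem[OF True] .
    have "\<forall>k\<le>m. VM.P (i - 1) (gX M k *v ?c) = 0"
    proof (intro allI impI)
      fix k assume "k \<le> m"
      hence "col q (lmul (VM.Pm (i - 1) ** gX M k) (Comp t T i)) = 0" using z by (simp add: col_def vec_eq_iff)
      thus "VM.P (i - 1) (gX M k *v ?c) = 0"
        by (simp add: col_lmul matrix_vector_mul_assoc[symmetric] VM.Pm_mv)
    qed
    hence "?c = 0" using VM.VL[OF i True cA] by blast
    thus "col q (Comp t T i) = col q 0" by (simp add: col_def vec_eq_iff)
  qed
qed

lemma Comp_alt: "j \<le> t \<Longrightarrow> Comp t T (t - j) = rmul (VN.Pm j) (lmul (VM.Pm (t - j)) T)"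
  by (simp add: Comp_def lmul_rmul)

lemma KL_right:
  assumes j: "1 \<le> j" "j \<le> t" and z: "\<forall>k\<le>m. rmul (VN.Pm (j - 1) ** gX N k) (Comp t T (t - j)) = 0"
  shows "Comp t T (t - j) = 0"
proof (cases "j \<le> l'")
  case False then show ?thesis by (simp add: Comp_alt[OF j(2)] rmul_Pm_out)
next
  case True
  show ?thesis
  proof (rule row_eq[THEN iffD1], intro allI)
    fix p
    let ?c = "row p (Comp t T (t - j))"
    have cB: "?c \<in> B j" unfolding Comp_alt[OF j(2)] row_rmul VN.Pm_mv using VN.P_mem[OF True] .
    have "\<forall>k\<le>m. VN.P (j - 1) (gX N k *v ?c) = 0"
    proof (intro allI impI)
      fix k assume "k \<le> m"
      hence "row p (rmul (VN.Pm (j - 1) ** gX N k) (Comp t T (t - j))) = 0" using z by (simp add: row_def vec_eq_iff)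
      thus "VN.P (j - 1) (gX N k *v ?c) = 0"
        by (simp add: row_rmul matrix_vector_mul_assoc[symmetric] VN.Pm_mv)
    qed
    hence "?c = 0" using VN.VL[OF j(1) True cB] by blast
    thus "row p (Comp t T (t - j)) = row p 0" by (simp add: row_def vec_eq_iff)
  qed
qed

definition Ssp :: "nat \<Rightarrow> ('a^('i \<times> 'j)) set" where
  "Ssp t = {T \<in> Spn t. \<forall>k\<le>m. XX k *v T = 0}"

lemma Ssp_eq: "S_space m M N A B l l' t = Ssp t"
  by (simp add: S_space_def Ssp_def Spn_def)

lemma Ssp_sub: "vec.subspace (Ssp t)"
  unfolding vec.subspace_def Ssp_def Spn_def
  by (auto simp: vec.span_zero vec.span_add vec.span_scale matrix_vector_right_distrib mv_scale)

lemma chain: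
  assumes T: "T \<in> Ssp t" and i0: "i0 \<le> t" "Comp t T i0 = 0"
  shows "\<forall>i\<le>t. Comp t T i = 0"
proof -
  have TS: "T \<in> Spn t" and X: "\<forall>k\<le>m. XX k *v T = 0" using T by (auto simp: Ssp_def)
  have fw: "Comp t T i = 0" if "1 \<le> i" "i \<le> t" "Comp t T (i - 1) = 0" for i
  proof (rule KL_left[OF that(1)], intro allI impI)
    fix k assume k: "k \<le> m"
    show "lmul (VM.Pm (i - 1) ** gX M k) (Comp t T i) = 0"
      using S_rel[OF TS _ that(1,2), of k] X k that(3) by simp
  qed
  have bw: "Comp t T (i - 1) = 0" if "1 \<le> i" "i \<le> t" "Comp t T i = 0" for i
  proof -
    let ?j = "Suc (t - i)"
    have j: "1 \<le> ?j" "?j \<le> t" using that by auto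
    have e1: "t - ?j = i - 1" "?j - 1 = t - i" using that by auto
    have "Comp t T (t - ?j) = 0"
    proof (rule KL_right[OF j], intro allI impI)
      fix k assume k: "k \<le> m"
      show "rmul (VN.Pm (?j - 1) ** gX N k) (Comp t T (t - ?j)) = 0"
        using S_rel[OF TS _ that(1,2), of k] X k that(3) e1 by simp
    qed
    thus ?thesis using e1 by simp
  qed
  have up: "\<forall>d. i0 + d \<le> t \<longrightarrow> Comp t T (i0 + d) = 0"
  proof
    fix d show "i0 + d \<le> t \<longrightarrow> Comp t T (i0 + d) = 0"
    proof (induction d)
      case 0 then show ?case using i0 by simp
    next
      case (Suc d)
      show ?case
      proof
        assume d: "i0 + Suc d \<le> t"
        have h: "Comp t T (i0 + d) = 0" using Suc.IH d by simp
        show "Comp t T (i0 + Suc d) = 0" by (rule fw) (use d h in simp_all)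
      qed
    qed
  qed
  have down: "\<forall>d. d \<le> i0 \<longrightarrow> Comp t T (i0 - d) = 0"
  proof
    fix d show "d \<le> i0 \<longrightarrow> Comp t T (i0 - d) = 0"
    proof (induction d)
      case 0 then show ?case using i0 by simp
    next
      case (Suc d)
      show ?case
      proof
        assume d: "Suc d \<le> i0"
        have h: "Comp t T (i0 - d) = 0" using Suc.IH d by simp
        have "Comp t T (i0 - d - 1) = 0" by (rule bw) (use d i0(1) h in simp_all)
        moreover have "i0 - Suc d = i0 - d - 1" by simp
        ultimately show "Comp t T (i0 - Suc d) = 0" by (simp only:)
      qed
    qed
  qed
  show ?thesis
  proof (intro allI impI)
    fix i assume "i \<le> t"
    show "Comp t T i = 0"
    proof (cases "i0 \<le> i")
      case True then show ?thesis using up[rule_format, of "i - i0"] \<open>i \<le> t\<close> by simp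
    next
      case False then show ?thesis using down[rule_format, of "i0 - i"] by simp
    qed
  qed
qed

lemma Ssp_zero_if_comp:
  assumes T: "T \<in> Ssp t" and i0: "i0 \<le> t" "Comp t T i0 = 0"
  shows "T = 0"
proof -
  have "T = (\<Sum>i\<le>t. Comp t T i)" using Comp_props T by (auto simp: Ssp_def)
  also have "\<dots> = 0" using chain[OF assms] by simp
  finally show ?thesis .
qed

end

context twomod
begin

lemma Comp_tmat:
  assumes X: "X \<in> {gE M, gH M, gF M}" and Y: "Y \<in> {gE N, gH N, gF N}"
  shows "tmat X Y *v Comp t T i = Comp t (tmat X Y *v T) i"
proof -
  have cX: "VM.Pm i ** X = X ** VM.Pm i" for i
    by (rule VM.Pm_comm) (use VM.invA X in \<open>auto simp: inv_sub_def\<close>)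
  have cY: "VN.Pm j ** Y = Y ** VN.Pm j" for j
    by (rule VN.Pm_comm) (use VN.invA Y in \<open>auto simp: inv_sub_def\<close>)
  have "tmat X Y *v Comp t T i = lmul (X ** VM.Pm i) (rmul (VN.Pm (t - i)) T)
      + lmul (VM.Pm i) (rmul (Y ** VN.Pm (t - i)) T)"
    by (simp add: Comp_def tmat_mv lmul_lmul rmul_rmul lmul_rmul)
  also have "\<dots> = lmul (VM.Pm i ** X) (rmul (VN.Pm (t - i)) T)
      + lmul (VM.Pm i) (rmul (VN.Pm (t - i) ** Y) T)"
    by (simp only: cX cY)
  also have "\<dots> = Comp t (tmat X Y *v T) i"
    by (simp add: Comp_def tmat_mv lmul_lmul[symmetric] rmul_rmul[symmetric] lmul_rmul lmul_add rmul_add)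
  finally show ?thesis .
qed

lemma Comp_tsub: "i \<le> l \<Longrightarrow> t - i \<le> l' \<Longrightarrow> Comp t T i \<in> tsub (A i) (B (t - i))"
  unfolding Comp_def
  by (rule lmul_rmul_tsub) (simp_all add: VM.Pm_mv VN.Pm_mv VM.P_mem VN.P_mem)

end

theorem proposition3p2:
  fixes M :: "('a::field_char_0, 'i::finite) gmod" and N :: "('a, 'j::finite) gmod"
    and m l l' :: nat and a b :: "nat \<Rightarrow> nat"
    and A :: "nat \<Rightarrow> ('a^'i) set" and B :: "nat \<Rightarrow> ('a^'j) set"
  assumes "m \<ge> 1"
    and "is_gm_module m M" and "is_gm_module m N"
    and "uniserial m M" and "uniserial m N"
    and "l \<ge> 1" and "l' \<ge> 1"
    and "socle_decomp m M l a A" and "socle_decomp m N l' b B"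
  shows "(\<forall>t > min l l'. S_space m M N A B l l' t = {0}) \<and>
    (\<forall>t \<mu>. 0 < t \<and> t \<le> min l l' \<and>
       (\<exists>T\<in>S_space m M N A B l l' t. hw_vec (tmat (gE M) (gE N)) (tmat (gH M) (gH N)) \<mu> T)
     \<longrightarrow>
       (\<forall>i\<le>t. \<exists>U. U \<subseteq> tsub (A i) (B (t - i)) \<and>
           irred_hw (tmat (gE M) (gE N)) (tmat (gH M) (gH N)) (tmat (gF M) (gF N)) \<mu> U) \<and>
       vec.dim {T \<in> S_space m M N A B l l' t. tmat (gE M) (gE N) *v T = 0 \<and>
                  tmat (gH M) (gH N) *v T = of_nat \<mu> *s T} = 1 \<and>
       (\<forall>v0. (\<forall>i\<le>t. v0 i \<in> tsub (A i) (B (t - i)) \<and>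
                 hw_vec (tmat (gE M) (gE N)) (tmat (gH M) (gH N)) \<mu> (v0 i)) \<longrightarrow>
          (\<exists>q. (\<forall>i\<le>t. q i \<noteq> 0) \<and>
             {T \<in> S_space m M N A B l l' t. tmat (gE M) (gE N) *v T = 0 \<and>
                  tmat (gH M) (gH N) *v T = of_nat \<mu> *s T}
             = vec.span {\<Sum>i\<le>t. q i *s v0 i})))"
proof -
  interpret tw: twomod m M l a A N l' b B
    using assms by (simp add: twomod_def dmod_def)
  interpret tp: tpair "gE M" "gH M" "gF M" "gE N" "gH N" "gF N"
    by (intro tpair.intro tw.VM.sl2 tw.VN.sl2)
  interpret ts: sl2 "tmat (gE M) (gE N)" "tmat (gH M) (gH N)" "tmat (gF M) (gF N)"
    by (rule sl2_tensor[OF tw.VM.sl2 tw.VN.sl2])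
  let ?Et = "tmat (gE M) (gE N)" and ?Ht = "tmat (gH M) (gH N)" and ?Ft = "tmat (gF M) (gF N)"
  have part1: "\<forall>t > min l l'. S_space m M N A B l l' t = {0}"
  proof (intro allI impI)
    fix t assume t: "min l l' < t"
    have "T = 0" if T: "T \<in> tw.Ssp t" for T
    proof (cases "l' < t")
      case True
      have "tw.Comp t T 0 = 0" using True by (simp add: tw.Comp_def tw.rmul_Pm_out)
      thus ?thesis using tw.Ssp_zero_if_comp[OF T, of 0] by simp
    next
      case False
      hence lt: "l < t" using t by simp
      have "tw.Comp t T t = 0" using lt by (simp add: tw.Comp_def tw.lmul_Pm_out)
      thus ?thesis using tw.Ssp_zero_if_comp[OF T, of t] by simp
    qed
    moreover have "0 \<in> tw.Ssp t" using tw.Ssp_sub by (simp add: vec.subspace_0)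
    ultimately show "S_space m M N A B l l' t = {0}" unfolding tw.Ssp_eq by blast
  qed
  have part2: "(\<forall>i\<le>t. \<exists>U. U \<subseteq> tsub (A i) (B (t - i)) \<and> irred_hw ?Et ?Ht ?Ft \<mu> U) \<and>
       vec.dim {T \<in> S_space m M N A B l l' t. ?Et *v T = 0 \<and> ?Ht *v T = of_nat \<mu> *s T} = 1 \<and>
       (\<forall>v0. (\<forall>i\<le>t. v0 i \<in> tsub (A i) (B (t - i)) \<and> hw_vec ?Et ?Ht \<mu> (v0 i)) \<longrightarrow>
          (\<exists>q. (\<forall>i\<le>t. q i \<noteq> 0) \<and>
             {T \<in> S_space m M N A B l l' t. ?Et *v T = 0 \<and> ?Ht *v T = of_nat \<mu> *s T}
             = vec.span {\<Sum>i\<le>t. q i *s v0 i}))"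
    if t: "0 < t" "t \<le> min l l'" and ex: "\<exists>T\<in>S_space m M N A B l l' t. hw_vec ?Et ?Ht \<mu> T" for t \<mu>
  proof -
    let ?Z = "{T \<in> S_space m M N A B l l' t. ?Et *v T = 0 \<and> ?Ht *v T = of_nat \<mu> *s T}"
    obtain T0 where T0: "T0 \<in> tw.Ssp t" "?Et *v T0 = 0" "?Ht *v T0 = of_nat \<mu> *s T0" "T0 \<noteq> 0"
      using ex unfolding tw.Ssp_eq hw_vec_def by blast
    have Zeq: "?Z = {T \<in> tw.Ssp t. ?Et *v T = 0 \<and> ?Ht *v T = of_nat \<mu> *s T}" unfolding tw.Ssp_eq ..
    have Zsub: "vec.subspace ?Z"
      unfolding Zeq vec.subspace_def
      using tw.Ssp_sub
      by (auto simp: vec.subspace_0 vec.subspace_add vec.subspace_scale matrix_vector_right_distrib mv_scale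
          vec.scale_right_distrib vector_smult_assoc mult.commute)
    have il: "i \<le> l" "t - i \<le> l'" if "i \<le> t" for i using that t by auto
    have comp: "tw.Comp t T i \<in> tsub (A i) (B (t - i)) \<and> ?Et *v tw.Comp t T i = 0
        \<and> ?Ht *v tw.Comp t T i = of_nat \<mu> *s tw.Comp t T i"
      if T: "T \<in> tw.Ssp t" "?Et *v T = 0" "?Ht *v T = of_nat \<mu> *s T" and i: "i \<le> t" for T i
    proof (intro conjI)
      show "tw.Comp t T i \<in> tsub (A i) (B (t - i))" using tw.Comp_tsub il[OF i] by blast
      show "?Et *v tw.Comp t T i = 0" using T(2) by (simp add: tw.Comp_tmat)
      show "?Ht *v tw.Comp t T i = of_nat \<mu> *s tw.Comp t T i" using T(3) by (simp add: tw.Comp_tmat tw.Comp_scale)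
    qed
    have nz: "tw.Comp t T0 i \<noteq> 0" if "i \<le> t" for i
      using tw.Ssp_zero_if_comp[OF T0(1) that] T0(4) by blast
    have irr: "irred_hw (gE M) (gH M) (gF M) (a i) (A i)" "irred_hw (gE N) (gH N) (gF N) (b (t - i)) (B (t - i))"
      if "i \<le> t" for i
      using tw.VM.irrA tw.VN.irrA il[OF that] by auto
    have propor: "\<exists>c. S = c *s T1"
      if i: "i \<le> t" and S: "S \<in> tsub (A i) (B (t - i))" "?Et *v S = 0" "?Ht *v S = of_nat \<mu> *s S"
        and T1: "T1 \<in> tsub (A i) (B (t - i))" "?Et *v T1 = 0" "?Ht *v T1 = of_nat \<mu> *s T1" "T1 \<noteq> 0"
      for i S T1
      by (rule tp.mult_one[OF irr(1)[OF i] irr(2)[OF i] T1 S])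
    have T0Z: "T0 \<in> ?Z" using T0 unfolding Zeq by blast
    have Zspan: "?Z = vec.span {T0}"
    proof
      show "vec.span {T0} \<subseteq> ?Z" using T0Z Zsub by (intro vec.span_minimal) auto
      show "?Z \<subseteq> vec.span {T0}"
      proof
        fix T assume "T \<in> ?Z"
        hence T: "T \<in> tw.Ssp t" "?Et *v T = 0" "?Ht *v T = of_nat \<mu> *s T" unfolding Zeq by auto
        obtain c where c: "tw.Comp t T 0 = c *s tw.Comp t T0 0"
          using propor[of 0 "tw.Comp t T 0" "tw.Comp t T0 0"] comp[OF T, of 0] comp[OF T0(1-3), of 0] nz[of 0]
          by auto
        have D: "T - c *s T0 \<in> tw.Ssp t" using T(1) T0(1) tw.Ssp_sub
          by (simp add: vec.subspace_diff vec.subspace_scale)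
        have "tw.Comp t (T - c *s T0) 0 = 0" using c by (simp add: tw.Comp_diff tw.Comp_scale)
        hence "T - c *s T0 = 0" using tw.Ssp_zero_if_comp[OF D, of 0] by simp
        hence "T = c *s T0" by simp
        thus "T \<in> vec.span {T0}" by (simp add: vec.span_scale vec.span_base)
      qed
    qed
    show ?thesis
    proof (intro conjI allI impI)
      fix i assume i: "i \<le> t"
      let ?v = "tw.Comp t T0 i"
      have cv: "?v \<in> tsub (A i) (B (t - i))" "?Et *v ?v = 0" "?Ht *v ?v = of_nat \<mu> *s ?v"
        using comp[OF T0(1-3) i] by auto
      have "Sp ?Ft ?v \<mu> \<subseteq> tsub (A i) (B (t - i))"
        unfolding Sp_def
      proof (rule vec.span_minimal)
        show "vec.subspace (tsub (A i) (B (t - i)))" by (simp add: tsub_def)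
        have "fp ?Ft j ?v \<in> tsub (A i) (B (t - i))" for j
        proof (induction j)
          case 0 then show ?case using cv by simp
        next
          case (Suc j)
          show ?case unfolding fp_Suc
            by (rule tmat_tsub_inv[OF _ _ Suc.IH])
              (use tw.VM.invA[OF il(1)[OF i]] tw.VN.invA[OF il(2)[OF i]] in \<open>auto simp: inv_sub_def\<close>)
        qed
        thus "(\<lambda>j. fp ?Ft j ?v) ` {..\<mu>} \<subseteq> tsub (A i) (B (t - i))" by auto
      qed
      moreover have "irred_hw ?Et ?Ht ?Ft \<mu> (Sp ?Ft ?v \<mu>)"
        by (rule ts.Sp_irred) (use cv nz[OF i] in auto)
      ultimately show "\<exists>U. U \<subseteq> tsub (A i) (B (t - i)) \<and> irred_hw ?Et ?Ht ?Ft \<mu> U" by blast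
    next
      have "vec.dim (vec.span {T0}) = 1"
        using T0(4) by (simp add: vec.dim_insert vec.span_empty)
      thus "vec.dim ?Z = 1" using Zspan by simp
    next
      fix v0 assume v0: "\<forall>i\<le>t. v0 i \<in> tsub (A i) (B (t - i)) \<and> hw_vec ?Et ?Ht \<mu> (v0 i)"
      have "\<forall>i\<le>t. \<exists>c. tw.Comp t T0 i = c *s v0 i"
      proof (intro allI impI)
        fix i assume i: "i \<le> t"
        have h: "v0 i \<in> tsub (A i) (B (t - i))" "?Et *v v0 i = 0" "?Ht *v v0 i = of_nat \<mu> *s v0 i" "v0 i \<noteq> 0"
          using v0 i by (auto simp: hw_vec_def)
        show "\<exists>c. tw.Comp t T0 i = c *s v0 i"
          using propor[OF i _ _ _ h] comp[OF T0(1-3) i] by blast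
      qed
      then obtain q where q: "\<forall>i\<le>t. tw.Comp t T0 i = q i *s v0 i" by metis
      have qnz: "\<forall>i\<le>t. q i \<noteq> 0"
      proof (intro allI impI notI)
        fix i assume "i \<le> t" "q i = 0"
        thus False using q nz by auto
      qed
      have "T0 = (\<Sum>i\<le>t. tw.Comp t T0 i)" using tw.Comp_props T0(1) by (auto simp: tw.Ssp_def)
      also have "\<dots> = (\<Sum>i\<le>t. q i *s v0 i)" using q by simp
      finally have "T0 = (\<Sum>i\<le>t. q i *s v0 i)" .
      thus "\<exists>q. (\<forall>i\<le>t. q i \<noteq> 0) \<and> ?Z = vec.span {\<Sum>i\<le>t. q i *s v0 i}"
        using qnz Zspan by auto
    qed
  qed
  show ?thesis
  proof (rule conjI[OF part1], intro allI impI)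
    fix t \<mu>
    assume h: "0 < t \<and> t \<le> min l l' \<and> (\<exists>T\<in>S_space m M N A B l l' t. hw_vec ?Et ?Ht \<mu> T)"
    show "(\<forall>i\<le>t. \<exists>U. U \<subseteq> tsub (A i) (B (t - i)) \<and> irred_hw ?Et ?Ht ?Ft \<mu> U) \<and>
       vec.dim {T \<in> S_space m M N A B l l' t. ?Et *v T = 0 \<and> ?Ht *v T = of_nat \<mu> *s T} = 1 \<and>
       (\<forall>v0. (\<forall>i\<le>t. v0 i \<in> tsub (A i) (B (t - i)) \<and> hw_vec ?Et ?Ht \<mu> (v0 i)) \<longrightarrow>
          (\<exists>q. (\<forall>i\<le>t. q i \<noteq> 0) \<and>
             {T \<in> S_space m M N A B l l' t. ?Et *v T = 0 \<and> ?Ht *v T = of_nat \<mu> *s T}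
             = vec.span {\<Sum>i\<le>t. q i *s v0 i}))"
      by (rule part2) (use h in simp_all)
  qed
qed

end
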